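(* Suppose $f$ satisfies (I), $f(\cdot,i,\mathbf q)\in C^1([0,\infty))$ for all $i,\mathbf q$, $f_t$ satisfies (I), and condition (R) holds. Let $Q^*\in\mathcal Q$ be a weak equilibrium and let $R=\{(i,Q)\in S\times(\mathcal Q\setminus\{Q^*\}):\Gamma^{Q^*}_i(Q^*_i)=\Gamma^{Q^*}_i(Q_i)\}$. If $\Lambda^{Q^*}(i,Q^* )>\Lambda^{Q^*}(i,Q)$ for all $(i,Q)\in R$, then $Q^*$ is a strong equilibrium. If $\Lambda^{Q^*}(i,Q^* )<\Lambda^{Q^*}(i,Q)$ for some $(i,Q)\in R$, then $Q^*$ is not a strong equilibrium.
   Context: Let $S=\{1,\dots,N\}$. For $i\in S$ let $E_i=\{q\in\mathbb R^N: q_j\ge0\text{ for }j\ne i,\ q_i=-\sum_{j\ne i}q_j\}$ and $D_i\subseteq E_i$ given; $\mathcal Q=\{Q\in\mathbb R^{N\times N}: Q_i\in D_i\ \forall i\}$, $Q_i$ the $i$-th row. For $Q\in\mathcal Q$, $X$ is a time-homogeneous continuous-time Markov chain on $S$ with generator $Q$, $\mathbb E_{i,Q}$ the expectation given $X_0=i$. A payoff function $f$ assigns $f(t,i,\mathbf q)\in\mathbb R$ to $t\ge0,i\in S,\mathbf q\in D_i$. Condition (I) for $g$: $\int_0^\infty\sup_{i\in S,\mathbf q\in D_i,\|\mathbf q\|\le c}|g(t,i,\mathbf q)|dt<\infty$ for all $c>0$. Condition (R): there is $r(t,\varepsilon;i,\mathbf q)$, continuous in $\varepsilon$, with $|f(t+\varepsilon,i,\mathbf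 q)-f(t,i,\mathbf q)-\varepsilon f_t(t,i,\mathbf q)|\le r(t,\varepsilon;i,\mathbf q)$, $\int_0^\infty r(t,\varepsilon;i,\mathbf q)dt<\infty$ for small $\varepsilon>0$, and $\varepsilon\mapsto r/\varepsilon$ nondecreasing. $F(i,Q)=\mathbb E_{i,Q}[\int_0^\infty f(t,X_t,Q_{X_t})dt]$, $G(i,Q)=\mathbb E_{i,Q}[\int_0^\infty f_t(t,X_t,Q_{X_t})dt]$, with vectors $F(Q),G(Q)\in\mathbb R^N$. $Q\otimes_\varepsilon Q'$: generator $Q$ on $[0,\varepsilon]$ then $Q'$ on $(\varepsilon,\infty)$, with expected payoff $F(i,Q\otimes_\varepsilon Q')$. Weak equilibrium: $\liminf_{\varepsilon\downarrow0}\varepsilon^{-1}(F(i,Q^* )-F(i,Q\otimes_\varepsilon Q^* ))\ge0$ for all $Q,i$. Strong equilibrium: for every $i,Q$ there is $\varepsilon>0$ with $F(i,Q^* )\ge F(i,Q\otimes_{\varepsilon'}Q^* )$ for all $0<\varepsilon'\le\varepsilon$. $\Gamma^{Q^*}_i(\mathbf q)=f(0,i,\mathbf q)+\mathbf q\cdot F(Q^* )$; $\Gamma^{Q^*}(Q)=(\Gamma^{Q^*}_1(Q_1),\dots,\Gamma^{Q^*}_N(Q_N))$; $\Lambda^{Q^*}(i,Q)=f_t(0,i,Q_i)+Q_i\cdot(2G(Q^* )+\Gamma^{Q^*}(Q))$. *)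

theory Defs
  imports "HOL-Analysis.Analysis"
begin

text \<open>State space S is a finite type 'n; generators are real^'n^'n, rows Q $ i.\<close>

definition E_set :: "'n::finite \<Rightarrow> (real^'n) set" where
  "E_set i = {q. (\<forall>j. j \<noteq> i \<longrightarrow> q $ j \<ge> 0) \<and> q $ i = - (\<Sum>j\<in>UNIV - {i}. q $ j)}"

definition gens :: "('n::finite \<Rightarrow> (real^'n) set) \<Rightarrow> (real^'n^'n) set" where
  "gens D = {Q. \<forall>i. Q $ i \<in> D i}"

fun mpow :: "real^'n::finite^'n \<Rightarrow> nat \<Rightarrow> real^'n^'n" where
  "mpow Q 0 = mat 1"
| "mpow Q (Suc k) = Q ** mpow Q k"

text \<open>Transition matrix P(t) = exp(tQ) of the chain with generator Q.\<close>
definition trans_mat :: "real \<Rightarrow> real^'n::finite^'n \<Rightarrow> real^'n^'n" where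
  "trans_mat t Q = (\<Sum>k. (t ^ k / fact k) *\<^sub>R mpow Q k)"

definition cond_I :: "('n::finite \<Rightarrow> (real^'n) set) \<Rightarrow> (real \<Rightarrow> 'n \<Rightarrow> real^'n \<Rightarrow> real) \<Rightarrow> bool" where
  "cond_I D g \<longleftrightarrow> (\<forall>c>0.
     let h = (\<lambda>t. SUP iq\<in>{(i,q). q \<in> D i \<and> norm q \<le> c}. ennreal \<bar>g t (fst iq) (snd iq)\<bar>)
     in (\<lambda>t. h t * indicator {0..} t) \<in> borel_measurable lborel
        \<and> (\<integral>\<^sup>+ t. h t * indicator {0..} t \<partial>lborel) < \<infinity>)"

definition cond_R :: "('n::finite \<Rightarrow> (real^'n) set) \<Rightarrow> (real \<Rightarrow> 'n \<Rightarrow> real^'n \<Rightarrow> real)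
     \<Rightarrow> (real \<Rightarrow> 'n \<Rightarrow> real^'n \<Rightarrow> real) \<Rightarrow> bool" where
  "cond_R D f ft \<longleftrightarrow> (\<exists>r :: real \<Rightarrow> real \<Rightarrow> 'n \<Rightarrow> real^'n \<Rightarrow> real.
     (\<forall>t\<ge>0. \<forall>i. \<forall>q\<in>D i. continuous_on {0<..} (\<lambda>\<epsilon>. r t \<epsilon> i q))
   \<and> (\<forall>t\<ge>0. \<forall>\<epsilon>>0. \<forall>i. \<forall>q\<in>D i.
        \<bar>f (t + \<epsilon>) i q - f t i q - \<epsilon> * ft t i q\<bar> \<le> r t \<epsilon> i q)
   \<and> (\<forall>i. \<forall>q\<in>D i. \<exists>\<epsilon>0>0. \<forall>\<epsilon>\<in>{0<..\<epsilon>0}.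
        set_integrable lborel {0..} (\<lambda>t. r t \<epsilon> i q))
   \<and> (\<forall>t\<ge>0. \<forall>i. \<forall>q\<in>D i. mono_on {0<..} (\<lambda>\<epsilon>. r t \<epsilon> i q / \<epsilon>)))"

text \<open>F(i,Q) = E_{i,Q}[int_0^oo g(t,X_t,Q_{X_t}) dt], written via the transition matrices.\<close>
definition payoff :: "(real \<Rightarrow> 'n::finite \<Rightarrow> real^'n \<Rightarrow> real) \<Rightarrow> real^'n^'n \<Rightarrow> 'n \<Rightarrow> real" where
  "payoff g Q i = (LINT t:{0..}|lborel. (\<Sum>j\<in>UNIV. trans_mat t Q $ i $ j * g t j (Q $ j)))"

text \<open>Expected payoff of Q \<otimes>_eps Q': generator Q on [0,eps], then Q' on (eps,oo).\<close>
definition payoff_sw :: "(real \<Rightarrow> 'n::finite \<Rightarrow> real^'n \<Rightarrow> real) \<Rightarrow> real \<Rightarrow> real^'n^'n \<Rightarrow> real^'n^'n \<Rightarrow> 'n \<Rightarrow> real" where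
  "payoff_sw g \<epsilon> Q Q' i =
     (LINT t:{0..\<epsilon>}|lborel. (\<Sum>j\<in>UNIV. trans_mat t Q $ i $ j * g t j (Q $ j)))
   + (LINT t:{\<epsilon><..}|lborel. (\<Sum>j\<in>UNIV. (trans_mat \<epsilon> Q ** trans_mat (t - \<epsilon>) Q') $ i $ j * g t j (Q' $ j)))"

definition payoff_vec :: "(real \<Rightarrow> 'n::finite \<Rightarrow> real^'n \<Rightarrow> real) \<Rightarrow> real^'n^'n \<Rightarrow> real^'n" where
  "payoff_vec g Q = (\<chi> j. payoff g Q j)"

definition weak_eq :: "('n::finite \<Rightarrow> (real^'n) set) \<Rightarrow> (real \<Rightarrow> 'n \<Rightarrow> real^'n \<Rightarrow> real) \<Rightarrow> real^'n^'n \<Rightarrow> bool" where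
  "weak_eq D f Qs \<longleftrightarrow> (\<forall>Q\<in>gens D. \<forall>i.
     Liminf (at_right 0) (\<lambda>\<epsilon>. ereal ((payoff f Qs i - payoff_sw f \<epsilon> Q Qs i) / \<epsilon>)) \<ge> 0)"

definition strong_eq :: "('n::finite \<Rightarrow> (real^'n) set) \<Rightarrow> (real \<Rightarrow> 'n \<Rightarrow> real^'n \<Rightarrow> real) \<Rightarrow> real^'n^'n \<Rightarrow> bool" where
  "strong_eq D f Qs \<longleftrightarrow> (\<forall>Q\<in>gens D. \<forall>i. \<exists>\<epsilon>>0. \<forall>\<epsilon>'. 0 < \<epsilon>' \<and> \<epsilon>' \<le> \<epsilon> \<longrightarrow>
     payoff f Qs i \<ge> payoff_sw f \<epsilon>' Q Qs i)"

definition Gamma :: "(real \<Rightarrow> 'n::finite \<Rightarrow> real^'n \<Rightarrow> real) \<Rightarrow> real^'n^'n \<Rightarrow> 'n \<Rightarrow> real^'n \<Rightarrow> real" where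
  "Gamma f Qs i q = f 0 i q + q \<bullet> payoff_vec f Qs"

definition Gamma_vec :: "(real \<Rightarrow> 'n::finite \<Rightarrow> real^'n \<Rightarrow> real) \<Rightarrow> real^'n^'n \<Rightarrow> real^'n^'n \<Rightarrow> real^'n" where
  "Gamma_vec f Qs Q = (\<chi> j. Gamma f Qs j (Q $ j))"

definition Lambda :: "(real \<Rightarrow> 'n::finite \<Rightarrow> real^'n \<Rightarrow> real) \<Rightarrow> (real \<Rightarrow> 'n \<Rightarrow> real^'n \<Rightarrow> real)
     \<Rightarrow> real^'n^'n \<Rightarrow> 'n \<Rightarrow> real^'n^'n \<Rightarrow> real" where
  "Lambda f ft Qs i Q = ft 0 i (Q $ i) + (Q $ i) \<bullet> (2 *\<^sub>R payoff_vec ft Qs + Gamma_vec f Qs Q)"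

end

theory Submission
  imports Defs
begin


definition mxn :: "real^'n::finite^'n \<Rightarrow> real" where
  "mxn A = Max (range (\<lambda>i. \<Sum>j\<in>UNIV. \<bar>A $ i $ j\<bar>))"

lemma rowsum_le_mxn: "(\<Sum>j\<in>UNIV. \<bar>A $ i $ j\<bar>) \<le> mxn A"
  unfolding mxn_def by (rule Max_ge) auto

lemma mxn_obtain: "\<exists>i. mxn A = (\<Sum>j\<in>UNIV. \<bar>A $ i $ j\<bar>)"
proof -
  have "mxn A \<in> range (\<lambda>i. \<Sum>j\<in>UNIV. \<bar>A $ i $ j\<bar>)"
    unfolding mxn_def by (rule Max_in) auto
  then show ?thesis by auto
qed

lemma entry_le_mxn: "\<bar>A $ i $ j\<bar> \<le> mxn A"
proof -
  have "\<bar>A $ i $ j\<bar> \<le> (\<Sum>j\<in>UNIV. \<bar>A $ i $ j\<bar>)"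
    by (rule member_le_sum) auto
  then show ?thesis using rowsum_le_mxn[of A i] by linarith
qed

lemma mxn_le: "(\<And>i. (\<Sum>j\<in>UNIV. \<bar>A $ i $ j\<bar>) \<le> c) \<Longrightarrow> mxn A \<le> c"
  using mxn_obtain[of A] by auto

lemma mxn_ge0: "0 \<le> mxn A"
  using rowsum_le_mxn[of A] sum_nonneg[of UNIV "\<lambda>j. \<bar>A $ undefined $ j\<bar>"]
  by (meson abs_ge_zero order_trans)

lemma mxn_mat1: "mxn (mat 1 :: real^'n::finite^'n) = 1"
proof -
  have r: "(\<Sum>j\<in>UNIV. \<bar>(mat 1 :: real^'n^'n) $ i $ j\<bar>) = 1" for i
  proof -
    have "\<bar>(mat 1 :: real^'n^'n) $ i $ j\<bar> = (if i = j then 1 else 0)" for j by (simp add: mat_def)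
    then show ?thesis by simp
  qed
  show ?thesis using r mxn_obtain[of "mat 1 :: real^'n^'n"] by metis
qed

typedef ('n::finite) mx = "UNIV :: (real^'n^'n) set" by simp

lemma Rep_mx_eqI: "Rep_mx a = Rep_mx b \<Longrightarrow> a = b" by (simp add: Rep_mx_inject)

instantiation mx :: (finite) real_normed_algebra_1
begin
definition "0 = Abs_mx 0"
definition "1 = Abs_mx (mat 1)"
definition "a + b = Abs_mx (Rep_mx a + Rep_mx b)"
definition "a - b = Abs_mx (Rep_mx a - Rep_mx b)"
definition "- a = Abs_mx (- Rep_mx a)"
definition "a * b = Abs_mx (Rep_mx a ** Rep_mx b)"
definition "scaleR r a = Abs_mx (r *\<^sub>R Rep_mx a)"
definition "norm a = mxn (Rep_mx a)"
definition "sgn (a::'a mx) = Abs_mx (inverse (mxn (Rep_mx a)) *\<^sub>R Rep_mx a)"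
definition "dist (a::'a mx) b = mxn (Rep_mx a - Rep_mx b)"
definition "uniformity = (INF e\<in>{0<..}. principal {(x::'a mx, y). dist x y < e})"
definition "open (U :: 'a mx set) = (\<forall>x\<in>U. eventually (\<lambda>(x', y). x' = x \<longrightarrow> y \<in> U) uniformity)"

lemma Rep_mx_simps[simp]:
  "Rep_mx 0 = 0" "Rep_mx 1 = mat 1" "Rep_mx (a + b) = Rep_mx a + Rep_mx b"
  "Rep_mx (a - b) = Rep_mx a - Rep_mx b" "Rep_mx (- a) = - Rep_mx a"
  "Rep_mx (a * b) = Rep_mx a ** Rep_mx b" "Rep_mx (r *\<^sub>R a) = r *\<^sub>R Rep_mx a"
  by (simp_all add: zero_mx_def one_mx_def plus_mx_def minus_mx_def uminus_mx_def
      times_mx_def scaleR_mx_def Abs_mx_inverse)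

instance
proof (intro_classes, goal_cases)
  case (1 a b c) show ?case by (rule Rep_mx_eqI) (simp add: add.assoc)
next case (2 a b) show ?case by (rule Rep_mx_eqI) (simp add: add.commute)
next case (3 a) show ?case by (rule Rep_mx_eqI) simp
next case (4 a) show ?case by (rule Rep_mx_eqI) simp
next case (5 a b) show ?case by (rule Rep_mx_eqI) simp
next case (6 r a b) show ?case by (rule Rep_mx_eqI) (simp add: scaleR_add_right)
next case (7 r s a) show ?case by (rule Rep_mx_eqI) (simp add: scaleR_add_left)
next case (8 r s a) show ?case by (rule Rep_mx_eqI) simp
next case (9 a) show ?case by (rule Rep_mx_eqI) simp
next case (10 a b c) show ?case by (rule Rep_mx_eqI) (simp add: matrix_mul_assoc)
next case (11 a b c) show ?case by (rule Rep_mx_eqI)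
    (simp add: matrix_matrix_mult_def vec_eq_iff sum.distrib distrib_right)
next case (12 a b c) show ?case by (rule Rep_mx_eqI) (simp add: matrix_add_ldistrib)
next case (13 r a b) show ?case by (rule Rep_mx_eqI) (simp add: scalar_matrix_assoc)
next case (14 a r b) show ?case by (rule Rep_mx_eqI) (simp add: matrix_scalar_ac scalar_matrix_assoc)
next case (15 a) show ?case by (rule Rep_mx_eqI) simp
next case (16 a) show ?case by (rule Rep_mx_eqI) simp
next case 17 show ?case
  proof
    assume "(0::'a mx) = 1"
    then have "Rep_mx (0::'a mx) $ undefined $ undefined = Rep_mx (1::'a mx) $ undefined $ undefined" by simp
    then show False by (simp add: mat_def)
  qed
next fix a b :: "'a mx" show "dist a b = norm (a - b)" by (simp add: dist_mx_def norm_mx_def minus_mx_def Abs_mx_inverse)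
next fix a :: "'a mx" show "sgn a = inverse (norm a) *\<^sub>R a" by (simp add: sgn_mx_def norm_mx_def scaleR_mx_def)
next fix a :: "'a mx" show "(norm a = 0) = (a = 0)" unfolding norm_mx_def
  proof
    assume "mxn (Rep_mx a) = 0"
    then have "\<And>i j. Rep_mx a $ i $ j = 0" using entry_le_mxn[of "Rep_mx a"] by (metis abs_le_zero_iff)
    then show "a = 0" by (intro Rep_mx_eqI) (simp add: vec_eq_iff)
  next
    assume "a = 0" then show "mxn (Rep_mx a) = 0"
      using mxn_ge0[of "Rep_mx a"] by (intro antisym mxn_le) simp_all
  qed
next fix a b :: "'a mx" show "norm (a + b) \<le> norm a + norm b" unfolding norm_mx_def
  proof (rule mxn_le)
    fix i
    have "(\<Sum>j\<in>UNIV. \<bar>Rep_mx (a + b) $ i $ j\<bar>) \<le> (\<Sum>j\<in>UNIV. \<bar>Rep_mx a $ i $ j\<bar> + \<bar>Rep_mx b $ i $ j\<bar>)"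
      by (intro sum_mono) (simp add: abs_triangle_ineq)
    also have "\<dots> \<le> mxn (Rep_mx a) + mxn (Rep_mx b)" using rowsum_le_mxn[of "Rep_mx a" i] rowsum_le_mxn[of "Rep_mx b" i]
      by (simp add: sum.distrib)
    finally show "(\<Sum>j\<in>UNIV. \<bar>Rep_mx (a + b) $ i $ j\<bar>) \<le> mxn (Rep_mx a) + mxn (Rep_mx b)" .
  qed
next fix r and a :: "'a mx" show "norm (r *\<^sub>R a) = \<bar>r\<bar> * norm a" unfolding norm_mx_def
  proof -
    have "mxn (Rep_mx (r *\<^sub>R a)) = Max ((\<lambda>x. \<bar>r\<bar> * x) ` range (\<lambda>i. \<Sum>j\<in>UNIV. \<bar>Rep_mx a $ i $ j\<bar>))"
      by (simp add: mxn_def abs_mult sum_distrib_left image_image)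
    also have "\<dots> = \<bar>r\<bar> * mxn (Rep_mx a)" unfolding mxn_def
      by (rule mono_Max_commute[symmetric]) (auto simp: mono_def mult_left_mono)
    finally show "mxn (Rep_mx (r *\<^sub>R a)) = \<bar>r\<bar> * mxn (Rep_mx a)" .
  qed
next fix a b :: "'a mx" show "norm (a * b) \<le> norm a * norm b" unfolding norm_mx_def
  proof (rule mxn_le)
    fix i
    have "(\<Sum>j\<in>UNIV. \<bar>Rep_mx (a * b) $ i $ j\<bar>)
        \<le> (\<Sum>j\<in>UNIV. \<Sum>l\<in>UNIV. \<bar>Rep_mx a $ i $ l\<bar> * \<bar>Rep_mx b $ l $ j\<bar>)"
      by (intro sum_mono) (auto simp: matrix_matrix_mult_def abs_mult[symmetric] intro: order_trans[OF sum_abs])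
    also have "\<dots> = (\<Sum>l\<in>UNIV. \<bar>Rep_mx a $ i $ l\<bar> * (\<Sum>j\<in>UNIV. \<bar>Rep_mx b $ l $ j\<bar>))"
      by (subst sum.swap) (simp add: sum_distrib_left)
    also have "\<dots> \<le> (\<Sum>l\<in>UNIV. \<bar>Rep_mx a $ i $ l\<bar> * mxn (Rep_mx b))"
      by (intro sum_mono mult_left_mono rowsum_le_mxn) auto
    also have "\<dots> \<le> mxn (Rep_mx a) * mxn (Rep_mx b)"
      using rowsum_le_mxn[of "Rep_mx a" i] mxn_ge0[of "Rep_mx b"]
      by (simp add: sum_distrib_right[symmetric] mult_right_mono)
    finally show "(\<Sum>j\<in>UNIV. \<bar>Rep_mx (a * b) $ i $ j\<bar>) \<le> mxn (Rep_mx a) * mxn (Rep_mx b)" .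
  qed
next show "norm (1::'a mx) = 1" by (simp add: norm_mx_def mxn_mat1)
next show "uniformity = (INF e\<in>{0<..}. principal {(x::'a mx, y). dist x y < e})" by (simp add: uniformity_mx_def)
next fix U :: "'a mx set" show "open U = (\<forall>x\<in>U. eventually (\<lambda>(x', y). x' = x \<longrightarrow> y \<in> U) uniformity)" by (simp add: open_mx_def)
qed
end


lemma mxn_le_total: "mxn A \<le> (\<Sum>i\<in>UNIV. \<Sum>j\<in>UNIV. \<bar>A $ i $ j\<bar>)"
  by (rule mxn_le) (rule member_le_sum, auto intro: sum_nonneg)

lemma norm_mx_eq: "norm a = mxn (Rep_mx a)" by (simp add: norm_mx_def)

lemma entry_le_norm: "\<bar>Rep_mx a $ i $ j\<bar> \<le> norm a"
  by (simp add: norm_mx_eq entry_le_mxn)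

instance mx :: (finite) banach
proof
  fix X :: "nat \<Rightarrow> 'a mx" assume X: "Cauchy X"
  have c: "Cauchy (\<lambda>n. Rep_mx (X n) $ i $ j)" for i j
  proof (rule metric_CauchyI)
    fix e :: real assume "0 < e"
    with X obtain M where M: "\<And>m n. M \<le> m \<Longrightarrow> M \<le> n \<Longrightarrow> dist (X m) (X n) < e"
      by (meson metric_CauchyD)
    show "\<exists>M. \<forall>m\<ge>M. \<forall>n\<ge>M. dist (Rep_mx (X m) $ i $ j) (Rep_mx (X n) $ i $ j) < e"
    proof (intro exI allI impI)
      fix m n assume "M \<le> m" "M \<le> n"
      have "dist (Rep_mx (X m) $ i $ j) (Rep_mx (X n) $ i $ j) = \<bar>Rep_mx (X m - X n) $ i $ j\<bar>"
        by (simp add: dist_real_def)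
      also have "\<dots> \<le> dist (X m) (X n)" unfolding dist_norm by (rule entry_le_norm)
      also have "\<dots> < e" using M \<open>M \<le> m\<close> \<open>M \<le> n\<close> by blast
      finally show "dist (Rep_mx (X m) $ i $ j) (Rep_mx (X n) $ i $ j) < e" .
    qed
  qed
  define L where "L = (\<chi> i j. lim (\<lambda>n. Rep_mx (X n) $ i $ j))"
  have l: "(\<lambda>n. Rep_mx (X n) $ i $ j) \<longlonglongrightarrow> L $ i $ j" for i j
    using c[of i j] unfolding L_def by (simp add: Cauchy_convergent_iff convergent_LIMSEQ_iff)
  have "(\<lambda>n. X n - Abs_mx L) \<longlonglongrightarrow> 0"
  proof (rule Lim_null_comparison)
    show "\<forall>\<^sub>F n in sequentially. norm (X n - Abs_mx L) \<le> (\<Sum>i\<in>UNIV. \<Sum>j\<in>UNIV. \<bar>Rep_mx (X n) $ i $ j - L $ i $ j\<bar>)"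
      using mxn_le_total[of "Rep_mx (X _) - L"] by (simp add: norm_mx_eq Abs_mx_inverse)
    have "(\<lambda>n. \<bar>Rep_mx (X n) $ i $ j - L $ i $ j\<bar>) \<longlonglongrightarrow> 0" for i j
      using l[of i j] by (simp add: tendsto_rabs_zero LIM_zero)
    then show "(\<lambda>n. \<Sum>i\<in>UNIV. \<Sum>j\<in>UNIV. \<bar>Rep_mx (X n) $ i $ j - L $ i $ j\<bar>) \<longlonglongrightarrow> 0"
      by (auto intro!: tendsto_null_sum)
  qed
  then have "X \<longlonglongrightarrow> Abs_mx L" by (simp add: LIM_zero_iff)
  then show "convergent X" by (auto simp: convergent_def)
qed



definition ent :: "'n::finite \<Rightarrow> 'n \<Rightarrow> 'n mx \<Rightarrow> real" where
  "ent i j a = Rep_mx a $ i $ j"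

lemma bounded_linear_ent: "bounded_linear (ent i j)"
proof (rule bounded_linear_intro[where K=1])
  show "ent i j (x + y) = ent i j x + ent i j y" for x y by (simp add: ent_def)
  show "ent i j (r *\<^sub>R x) = r *\<^sub>R ent i j x" for r x by (simp add: ent_def)
  show "norm (ent i j x) \<le> norm x * 1" for x using entry_le_norm[of x i j] by (simp add: ent_def)
qed

lemma bounded_linear_Rep_mx: "bounded_linear (Rep_mx :: 'n::finite mx \<Rightarrow> _)"
proof (rule bounded_linear_intro[where K="real CARD('n) * real CARD('n)"])
  show "Rep_mx (x + y) = Rep_mx x + Rep_mx y" for x y :: "'n mx" by simp
  show "Rep_mx (r *\<^sub>R x) = r *\<^sub>R Rep_mx x" for r and x :: "'n mx" by simp
  fix x :: "'n mx"
  have "norm (Rep_mx x) \<le> (\<Sum>i\<in>UNIV. norm (Rep_mx x $ i))" unfolding norm_vec_def by (rule L2_set_le_sum) auto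
  also have "\<dots> \<le> (\<Sum>i\<in>(UNIV::'n set). \<Sum>j\<in>(UNIV::'n set). norm x)"
    by (intro sum_mono order_trans[OF norm_le_l1_cart]) (simp add: entry_le_norm)
  also have "\<dots> = norm x * (real CARD('n) * real CARD('n))" by simp
  finally show "norm (Rep_mx x) \<le> norm x * (real CARD('n) * real CARD('n))" .
qed

lemma Rep_mx_power: "Rep_mx (x ^ k) = mpow (Rep_mx x) k"
  by (induction k) simp_all

lemma mpow_scaleR: "mpow (t *\<^sub>R Q) k = (t ^ k) *\<^sub>R mpow Q k"
  by (induction k) (simp_all add: scalar_matrix_assoc[symmetric] matrix_scalar_ac)

definition Emx :: "real \<Rightarrow> real^'n::finite^'n \<Rightarrow> 'n mx" where
  "Emx t Q = exp (t *\<^sub>R Abs_mx Q)"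

lemma trans_mat_Ex: "trans_mat t Q = Rep_mx (Emx t Q)"
proof -
  have "(\<lambda>n. Rep_mx ((t *\<^sub>R Abs_mx Q) ^ n /\<^sub>R fact n)) sums Rep_mx (Emx t Q)"
    unfolding Emx_def by (rule bounded_linear.sums[OF bounded_linear_Rep_mx exp_converges])
  moreover have "Rep_mx ((t *\<^sub>R Abs_mx Q) ^ n /\<^sub>R fact n) = (t ^ n / fact n) *\<^sub>R mpow Q n" for n
    by (simp add: Rep_mx_power Abs_mx_inverse mpow_scaleR divide_inverse mult.commute)
  ultimately show ?thesis unfolding trans_mat_def by (simp add: sums_iff)
qed

lemma trans_mat_ent: "trans_mat t Q $ i $ j = ent i j (Emx t Q)"
  by (simp add: trans_mat_Ex ent_def)

lemma Ex_add: "Emx s Q * Emx t Q = Emx (s + t) Q"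
  unfolding Emx_def
  by (simp add: exp_add_commuting[symmetric] scaleR_add_left mult_scaleR_left mult_scaleR_right)

lemma trans_mat_add: "trans_mat s Q ** trans_mat t Q = trans_mat (s + t) Q"
  by (simp add: trans_mat_Ex Ex_add[symmetric])

lemma trans_mat_0: "trans_mat 0 Q = mat 1"
  by (simp add: trans_mat_Ex Emx_def)

lemma continuous_Ex: "continuous_on S (\<lambda>t. Emx t Q)"
  unfolding Emx_def
  by (intro continuous_at_imp_continuous_on ballI has_vector_derivative_continuous)
    (rule exp_scaleR_has_vector_derivative_right[where T=UNIV])

lemma continuous_trans_mat: "continuous_on S (\<lambda>t. trans_mat t Q $ i $ j)"
  unfolding trans_mat_ent
  by (rule continuous_on_compose2[OF linear_continuous_on[OF bounded_linear_ent] continuous_Ex]) auto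



definition genm :: "real^'n::finite^'n \<Rightarrow> bool" where
  "genm Q \<longleftrightarrow> (\<forall>i. Q $ i \<in> E_set i)"

lemma genm_rowsum: "genm Q \<Longrightarrow> (\<Sum>j\<in>UNIV. Q $ i $ j) = 0"
proof -
  assume "genm Q"
  then have "Q $ i $ i = - (\<Sum>j\<in>UNIV - {i}. Q $ i $ j)" by (simp add: genm_def E_set_def)
  moreover have "(\<Sum>j\<in>UNIV. Q $ i $ j) = Q $ i $ i + (\<Sum>j\<in>UNIV - {i}. Q $ i $ j)"
    by (simp add: sum.remove)
  ultimately show ?thesis by simp
qed

lemma genm_offdiag: "genm Q \<Longrightarrow> j \<noteq> i \<Longrightarrow> 0 \<le> Q $ i $ j"
  by (simp add: genm_def E_set_def)

lemma mpow_rowsum: "genm Q \<Longrightarrow> (\<Sum>j\<in>UNIV. mpow Q n $ i $ j) = (if n = 0 then 1 else 0)"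
proof (induction n arbitrary: i)
  case 0
  have "(mat 1 :: real^'a^'a) $ i $ j = (if i = j then 1 else 0)" for j by (simp add: mat_def)
  then show ?case by simp
next
  case (Suc n)
  have "(\<Sum>j\<in>UNIV. mpow Q (Suc n) $ i $ j) = (\<Sum>j\<in>UNIV. \<Sum>l\<in>UNIV. Q $ i $ l * mpow Q n $ l $ j)"
    by (simp add: matrix_matrix_mult_def)
  also have "\<dots> = (\<Sum>l\<in>UNIV. Q $ i $ l * (\<Sum>j\<in>UNIV. mpow Q n $ l $ j))"
    by (subst sum.swap) (simp add: sum_distrib_left)
  also have "\<dots> = (\<Sum>l\<in>UNIV. Q $ i $ l) * (if n = 0 then 1 else 0)"
    using Suc by (simp add: sum_distrib_right)
  also have "\<dots> = 0" using genm_rowsum[OF Suc.prems] by simp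
  finally show ?case by simp
qed

lemma trans_mat_sums: "(\<lambda>n. (t ^ n / fact n) * mpow Q n $ i $ j) sums (trans_mat t Q $ i $ j)"
proof -
  have "(\<lambda>n. ent i j ((t *\<^sub>R Abs_mx Q) ^ n /\<^sub>R fact n)) sums ent i j (Emx t Q)"
    unfolding Emx_def by (rule bounded_linear.sums[OF bounded_linear_ent exp_converges])
  moreover have "ent i j ((t *\<^sub>R Abs_mx Q) ^ n /\<^sub>R fact n) = (t ^ n / fact n) * mpow Q n $ i $ j" for n
    by (simp add: ent_def Rep_mx_power Abs_mx_inverse mpow_scaleR divide_inverse mult.commute)
  ultimately show ?thesis by (simp add: trans_mat_ent)
qed

lemma trans_mat_rowsum: "genm Q \<Longrightarrow> (\<Sum>j\<in>UNIV. trans_mat t Q $ i $ j) = 1"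
proof -
  assume g: "genm Q"
  have "(\<lambda>n. \<Sum>j\<in>UNIV. (t ^ n / fact n) * mpow Q n $ i $ j) sums (\<Sum>j\<in>UNIV. trans_mat t Q $ i $ j)"
    by (rule sums_sum) (rule trans_mat_sums)
  moreover have "(\<lambda>n. \<Sum>j\<in>UNIV. (t ^ n / fact n) * mpow Q n $ i $ j) = (\<lambda>n. if n = 0 then 1 else 0)"
    by (rule ext, subst sum_distrib_left[symmetric], simp add: mpow_rowsum[OF g])
  moreover have "(\<lambda>n::nat. if n = 0 then 1 else (0::real)) sums 1"
    using sums_single[of 0 "\<lambda>_. 1::real"] by simp
  ultimately show ?thesis by (metis sums_unique2)
qed

lemma mpow_nonneg: "(\<And>i j. 0 \<le> B $ i $ j) \<Longrightarrow> 0 \<le> mpow B n $ i $ j"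
proof (induction n arbitrary: i j)
  case 0 then show ?case by (simp add: mat_def)
next
  case (Suc n) then show ?case
    by (simp add: matrix_matrix_mult_def sum_nonneg)
qed

lemma trans_mat_nonneg_aux: "(\<And>i j. 0 \<le> B $ i $ j) \<Longrightarrow> 0 \<le> t \<Longrightarrow> 0 \<le> trans_mat t B $ i $ j"
proof -
  assume B: "\<And>i j. 0 \<le> B $ i $ j" and t: "0 \<le> t"
  have "0 \<le> (t ^ n / fact n) * mpow B n $ i $ j" for n
    using mpow_nonneg[OF B] t by simp
  moreover have s: "(\<lambda>n. (t ^ n / fact n) * mpow B n $ i $ j) sums (trans_mat t B $ i $ j)"
    by (rule trans_mat_sums)
  ultimately show ?thesis using suminf_nonneg[OF sums_summable[OF s]] sums_unique[OF s] by simp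
qed

lemma Ex_shift: "Emx t (Q + mat c) = exp (t * c) *\<^sub>R Emx t Q"
proof -
  have "Abs_mx (Q + mat c) = Abs_mx Q + c *\<^sub>R (1::'a mx)"
    by (rule Rep_mx_eqI) (simp add: Abs_mx_inverse mat_def vec_eq_iff)
  then have "t *\<^sub>R Abs_mx (Q + mat c) = t *\<^sub>R Abs_mx Q + (t * c) *\<^sub>R 1"
    by (simp add: scaleR_add_right)
  moreover have "exp (t *\<^sub>R Abs_mx Q + (t * c) *\<^sub>R 1) = exp (t *\<^sub>R Abs_mx Q) * exp ((t * c) *\<^sub>R (1::'a mx))"
    by (rule exp_add_commuting) (simp add: mult_scaleR_left mult_scaleR_right)
  ultimately have "Emx t (Q + mat c) = exp (t *\<^sub>R Abs_mx Q) * exp (of_real (t * c))"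
    unfolding Emx_def by (simp add: of_real_def)
  also have "exp (of_real (t * c) :: 'a mx) = exp (t * c) *\<^sub>R 1"
    unfolding exp_of_real by (simp add: of_real_def)
  also have "exp (t *\<^sub>R Abs_mx Q) * (exp (t * c) *\<^sub>R 1) = exp (t * c) *\<^sub>R Emx t Q"
    by (simp add: Emx_def mult_scaleR_right)
  finally show ?thesis .
qed

lemma trans_mat_nonneg: "genm Q \<Longrightarrow> 0 \<le> t \<Longrightarrow> 0 \<le> trans_mat t Q $ i $ j"
proof -
  assume g: "genm Q" and t: "0 \<le> t"
  define c where "c = (\<Sum>k\<in>UNIV. \<bar>Q $ k $ k\<bar>)"
  have "0 \<le> (Q + mat c) $ k $ l" for k l
  proof (cases "k = l")
    case True
    have "\<bar>Q $ k $ k\<bar> \<le> c" unfolding c_def by (rule member_le_sum) auto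
    then show ?thesis using True by (simp add: mat_def)
  next
    case False then show ?thesis using genm_offdiag[OF g, of l k] by (simp add: mat_def)
  qed
  then have "0 \<le> trans_mat t (Q + mat c) $ i $ j" using t by (rule trans_mat_nonneg_aux)
  then have "0 \<le> exp (t * c) * trans_mat t Q $ i $ j"
    by (simp add: trans_mat_ent Ex_shift ent_def)
  then show ?thesis by (simp add: zero_le_mult_iff)
qed

lemma trans_mat_le1: "genm Q \<Longrightarrow> 0 \<le> t \<Longrightarrow> trans_mat t Q $ i $ j \<le> 1"
proof -
  assume g: "genm Q" and t: "0 \<le> t"
  have "trans_mat t Q $ i $ j \<le> (\<Sum>j\<in>UNIV. trans_mat t Q $ i $ j)"
    by (rule member_le_sum) (auto intro: trans_mat_nonneg[OF g t])
  then show ?thesis using trans_mat_rowsum[OF g] by simp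
qed

lemma trans_mat_abs_le1: "genm Q \<Longrightarrow> 0 \<le> t \<Longrightarrow> \<bar>trans_mat t Q $ i $ j\<bar> \<le> 1"
  using trans_mat_nonneg trans_mat_le1 by (metis abs_of_nonneg)



lemma exp_taylor2:
  fixes x :: "'a::{real_normed_algebra_1,banach}"
  shows "norm (exp x - 1 - x - (1/2) *\<^sub>R x^2) \<le> norm x ^ 3 * exp (norm x)"
proof -
  have e: "exp x = (\<Sum>n<3. inverse(fact n) *\<^sub>R (x ^ n)) + (\<Sum>n. inverse(fact (n + 3)) *\<^sub>R (x ^ (n + 3)))"
    by (rule exp_first_terms)
  have s3: "(\<Sum>n<3. inverse(fact n) *\<^sub>R (x ^ n)) = 1 + x + (1/2) *\<^sub>R x^2"
    by (simp add: numeral_3_eq_3 lessThan_Suc eval_nat_numeral)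
  have b: "norm (inverse(fact (n + 3)) *\<^sub>R (x ^ (n + 3))) \<le> norm x ^ 3 * (norm x ^ n / fact n)" for n
  proof -
    have "norm (inverse(fact (n + 3)) *\<^sub>R (x ^ (n + 3))) = norm (x ^ (n + 3)) / fact (n + 3)"
      by (simp add: divide_inverse mult.commute)
    also have "\<dots> \<le> norm x ^ (n + 3) / fact (n + 3)"
      by (intro divide_right_mono norm_power_ineq) simp
    also have "\<dots> \<le> norm x ^ (n + 3) / fact n"
      by (intro divide_left_mono fact_mono) auto
    also have "\<dots> = norm x ^ 3 * (norm x ^ n / fact n)" by (simp add: power_add)
    finally show ?thesis .
  qed
  have sr: "(\<lambda>n. norm x ^ n / fact n) sums exp (norm x)"
    using exp_converges[of "norm x"] by (simp add: divide_inverse mult.commute)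
  then have sb: "summable (\<lambda>n. norm x ^ 3 * (norm x ^ n / fact n))"
    by (intro summable_mult sums_summable)
  have sn: "summable (\<lambda>n. norm (inverse(fact (n + 3)) *\<^sub>R (x ^ (n + 3))))"
    by (rule summable_comparison_test[OF _ sb]) (use b in auto)
  have "norm (exp x - 1 - x - (1/2) *\<^sub>R x^2) = norm (\<Sum>n. inverse(fact (n + 3)) *\<^sub>R (x ^ (n + 3)))"
    by (subst e) (simp add: s3)
  also have "\<dots> \<le> (\<Sum>n. norm (inverse(fact (n + 3)) *\<^sub>R (x ^ (n + 3))))"
    by (rule summable_norm[OF sn])
  also have "\<dots> \<le> (\<Sum>n. norm x ^ 3 * (norm x ^ n / fact n))"
    by (rule suminf_le[OF b sn sb])
  also have "\<dots> = norm x ^ 3 * exp (norm x)"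
    using suminf_mult[OF sums_summable[OF sr], of "norm x ^ 3"] sums_unique[OF sr] by simp
  finally show ?thesis .
qed

lemma mpow2: "mpow Q 2 = Q ** Q"
  by (simp add: eval_nat_numeral)

lemma trans_mat_taylor2:
  "\<bar>trans_mat t Q $ i $ j - mat 1 $ i $ j - t * Q $ i $ j - t^2 / 2 * (Q ** Q) $ i $ j\<bar>
     \<le> (\<bar>t\<bar> * norm (Abs_mx Q)) ^ 3 * exp (\<bar>t\<bar> * norm (Abs_mx Q))"
proof -
  let ?x = "t *\<^sub>R Abs_mx Q"
  have "trans_mat t Q $ i $ j - mat 1 $ i $ j - t * Q $ i $ j - t^2 / 2 * (Q ** Q) $ i $ j
      = ent i j (exp ?x - 1 - ?x - (1/2) *\<^sub>R ?x^2)"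
    by (simp add: trans_mat_ent Emx_def ent_def Rep_mx_power Abs_mx_inverse mpow_scaleR mpow2)
  also have "\<bar>\<dots>\<bar> \<le> norm (exp ?x - 1 - ?x - (1/2) *\<^sub>R ?x^2)"
    unfolding ent_def by (rule entry_le_norm)
  also have "\<dots> \<le> norm ?x ^ 3 * exp (norm ?x)" by (rule exp_taylor2)
  finally show ?thesis by simp
qed

lemma trans_mat_deriv0:
  "((\<lambda>t. trans_mat t Q $ i $ j) has_real_derivative Q $ i $ j) (at 0 within S)"
proof -
  have "((\<lambda>t. Emx t Q) has_vector_derivative Emx 0 Q * Abs_mx Q) (at 0 within S)"
    unfolding Emx_def by (rule exp_scaleR_has_vector_derivative_right)
  then have "((\<lambda>t. Emx t Q) has_derivative (\<lambda>h. h *\<^sub>R Abs_mx Q)) (at 0 within S)"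
    by (simp add: has_vector_derivative_def Emx_def)
  then have "((\<lambda>t. ent i j (Emx t Q)) has_derivative (\<lambda>h. ent i j (h *\<^sub>R Abs_mx Q))) (at 0 within S)"
    by (rule bounded_linear.has_derivative[OF bounded_linear_ent])
  then have "((\<lambda>t. ent i j (Emx t Q)) has_derivative (\<lambda>h. h * Q $ i $ j)) (at 0 within S)"
    by (simp add: ent_def Abs_mx_inverse)
  moreover have "(\<lambda>h. h * Q $ i $ j) = (\<lambda>h. Q $ i $ j * h)" by (auto simp: mult.commute)
  ultimately show ?thesis
    by (simp add: trans_mat_ent has_field_derivative_def)
qed



lemma set_integrable_sum':
  fixes f :: "'i \<Rightarrow> real \<Rightarrow> real"
  assumes "finite I" "\<And>k. k \<in> I \<Longrightarrow> set_integrable M A (f k)"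
  shows "set_integrable M A (\<lambda>x. \<Sum>k\<in>I. f k x)"
  using assms
proof (induction I rule: finite_induct)
  case empty then show ?case by (simp add: set_integrable_def)
next
  case (insert a I)
  then have "set_integrable M A (\<lambda>x. f a x + (\<Sum>k\<in>I. f k x))"
    by (intro set_integral_add(1)) auto
  then show ?case using insert by simp
qed

lemma set_integral_sum':
  fixes f :: "'i \<Rightarrow> real \<Rightarrow> real"
  assumes "finite I" "\<And>k. k \<in> I \<Longrightarrow> set_integrable M A (f k)"
  shows "(LINT x:A|M. (\<Sum>k\<in>I. f k x)) = (\<Sum>k\<in>I. LINT x:A|M. f k x)"
  using assms
proof (induction I rule: finite_induct)
  case empty then show ?case by simp
next
  case (insert a I)
  have "(LINT x:A|M. (\<Sum>k\<in>insert a I. f k x)) = (LINT x:A|M. f a x + (\<Sum>k\<in>I. f k x))"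
    using insert by simp
  also have "\<dots> = (LINT x:A|M. f a x) + (LINT x:A|M. (\<Sum>k\<in>I. f k x))"
    using insert by (intro set_integral_add(2) set_integrable_sum') auto
  finally show ?case using insert by simp
qed

lemma int_taylor0:
  fixes g :: "real \<Rightarrow> real"
  assumes d: "(g has_real_derivative g1) (at 0 within {0..})"
    and int: "\<And>e. 0 < e \<Longrightarrow> set_integrable lborel {0..e} g"
  shows "((\<lambda>e. ((LINT t:{0..e}|lborel. g t) - e * g 0 - e^2/2 * g1) / e^2) \<longlongrightarrow> 0) (at_right 0)"
proof (rule tendstoI)
  fix \<eta> :: real assume "0 < \<eta>"
  from d have "((\<lambda>y. (g y - g 0) / (y - 0)) \<longlongrightarrow> g1) (at 0 within {0..})"
    by (simp add: has_field_derivative_iff)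
  from tendstoD[OF this, of "\<eta>/2"] \<open>0 < \<eta>\<close> obtain \<delta> where \<delta>: "0 < \<delta>"
    and h: "\<And>y. y \<in> {0..} \<Longrightarrow> y \<noteq> 0 \<Longrightarrow> dist y 0 < \<delta> \<Longrightarrow> dist ((g y - g 0) / (y - 0)) g1 < \<eta>/2"
    by (auto simp: eventually_at)
  have phi: "\<bar>g t - g 0 - t * g1\<bar> \<le> \<eta>/2 * t" if "0 \<le> t" "t < \<delta>" for t
  proof (cases "t = 0")
    case True then show ?thesis by simp
  next
    case False
    with that have "t > 0" by simp
    have "\<bar>(g t - g 0) / t - g1\<bar> < \<eta>/2" using h[of t] that False by (simp add: dist_real_def)
    then have "\<bar>((g t - g 0) / t - g1) * t\<bar> \<le> \<eta>/2 * t" using \<open>t > 0\<close>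
      by (simp add: abs_mult)
    moreover have "((g t - g 0) / t - g1) * t = g t - g 0 - t * g1" using \<open>t > 0\<close>
      by (simp add: field_simps)
    ultimately show ?thesis by simp
  qed
  have "\<forall>\<^sub>F e in at_right 0. 0 < e \<and> e < \<delta>"
    using \<delta> by (auto simp: eventually_at_right_field)
  then show "\<forall>\<^sub>F e in at_right 0. dist (((LINT t:{0..e}|lborel. g t) - e * g 0 - e^2/2 * g1) / e^2) 0 < \<eta>"
  proof eventually_elim
    case (elim e)
    then have e: "0 < e" "e < \<delta>" by auto
    have ic: "set_integrable lborel {0..e} (\<lambda>t. g 0 + t * g1)"
      by (rule borel_integrable_atLeastAtMost') (intro continuous_intros)
    have i1: "set_integrable lborel {0..e} (\<lambda>t. t)"
      by (rule borel_integrable_atLeastAtMost') (intro continuous_intros)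
    have lin: "(LINT t:{0..e}|lborel. g 0 + t * g1) = e * g 0 + e^2/2 * g1"
    proof -
      have "(LINT t:{0..e}|lborel. g 0 + t * g1) = (LINT t:{0..e}|lborel. g 0) + (LINT t:{0..e}|lborel. t * g1)"
        by (rule set_integral_add(2)) (use i1 in \<open>auto intro: set_integrable_mult_left borel_integrable_atLeastAtMost'\<close>)
      also have "(LINT t:{0..e}|lborel. g 0) = e * g 0"
        using e by (subst set_integral_const) auto
      also have "(LINT t:{0..e}|lborel. t * g1) = (LINT t:{0..e}|lborel. t) * g1"
        by simp
      also have "(LINT t:{0..e}|lborel. t) = e^2/2"
        using integral_power[of 0 e 1] e
        by (simp add: set_lebesgue_integral_def mult.commute power2_eq_square)
      finally show ?thesis by simp
    qed
    have ip: "set_integrable lborel {0..e} (\<lambda>t. g t - (g 0 + t * g1))"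
      using int[OF e(1)] ic by (rule set_integral_diff(1))
    have "(LINT t:{0..e}|lborel. g t) - e * g 0 - e^2/2 * g1 = (LINT t:{0..e}|lborel. g t - (g 0 + t * g1))"
      using set_integral_diff(2)[OF int[OF e(1)] ic] lin by simp
    also have "\<bar>\<dots>\<bar> \<le> (LINT t:{0..e}|lborel. \<bar>g t - (g 0 + t * g1)\<bar>)"
      using set_integral_norm_bound[OF ip] by simp
    also have "\<dots> \<le> (LINT t:{0..e}|lborel. \<eta>/2 * e)"
    proof (rule set_integral_mono)
      show "set_integrable lborel {0..e} (\<lambda>t. \<bar>g t - (g 0 + t * g1)\<bar>)"
        using ip by (simp add: set_integrable_abs)
      show "set_integrable lborel {0..e} (\<lambda>t. \<eta>/2 * e)"
        by (rule borel_integrable_atLeastAtMost') (intro continuous_intros)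
      fix t assume "t \<in> {0..e}"
      then have "\<bar>g t - g 0 - t * g1\<bar> \<le> \<eta>/2 * t" "\<eta>/2 * t \<le> \<eta>/2 * e"
        using phi[of t] e \<open>0 < \<eta>\<close> by auto
      then show "\<bar>g t - (g 0 + t * g1)\<bar> \<le> \<eta>/2 * e" by (simp add: algebra_simps)
    qed
    also have "\<dots> = \<eta>/2 * e^2"
      using e by (subst set_integral_const) (auto simp: power2_eq_square)
    finally have "\<bar>(LINT t:{0..e}|lborel. g t) - e * g 0 - e^2/2 * g1\<bar> \<le> \<eta>/2 * e^2" .
    then have "\<bar>((LINT t:{0..e}|lborel. g t) - e * g 0 - e^2/2 * g1) / e^2\<bar> \<le> \<eta>/2"
      using e by (simp add: abs_divide divide_le_eq)
    moreover have "\<eta>/2 < \<eta>" using \<open>0 < \<eta>\<close> by simp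
    ultimately have "\<bar>((LINT t:{0..e}|lborel. g t) - e * g 0 - e^2/2 * g1) / e^2\<bar> < \<eta>"
      by (rule le_less_trans)
    then show ?case by (simp only: dist_real_def diff_zero)
  qed
qed



lemma DCT_right:
  fixes s :: "real \<Rightarrow> real \<Rightarrow> real" and w :: "real \<Rightarrow> real"
  assumes e0: "0 < e0"
    and meas: "\<And>e. 0 < e \<Longrightarrow> e \<le> e0 \<Longrightarrow> s e \<in> borel_measurable lborel"
    and w: "integrable lborel w"
    and lim: "\<And>x. ((\<lambda>e. s e x) \<longlongrightarrow> 0) (at_right 0)"
    and bnd: "\<And>e x. 0 < e \<Longrightarrow> e \<le> e0 \<Longrightarrow> norm (s e x) \<le> w x"
  shows "((\<lambda>e. integral\<^sup>L lborel (s e)) \<longlongrightarrow> 0) (at_right 0)"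
proof -
  define s' where "s' T = (if 0 < inverse T \<and> inverse T \<le> e0 then s (inverse T) else (\<lambda>x. 0))" for T
  have ev: "\<forall>\<^sub>F T in at_top. 0 < inverse T \<and> inverse T \<le> e0"
    unfolding eventually_at_top_linorder
  proof (intro exI allI impI)
    fix T :: real assume "1 / e0 \<le> T"
    moreover have "0 < 1 / e0" using e0 by simp
    ultimately have "0 < T" by linarith
    then have "0 < inverse T" by simp
    moreover have "inverse T \<le> e0"
      using \<open>1 / e0 \<le> T\<close> e0 \<open>0 < T\<close> by (simp add: field_simps)
    ultimately show "0 < inverse T \<and> inverse T \<le> e0" by simp
  qed
  have "((\<lambda>T. integral\<^sup>L lborel (s' T)) \<longlongrightarrow> integral\<^sup>L lborel (\<lambda>x::real. 0::real)) at_top"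
  proof (rule integral_dominated_convergence_at_top[where w=w])
    show "(\<lambda>x::real. 0::real) \<in> borel_measurable lborel" by simp
    show "s' T \<in> borel_measurable lborel" for T
      unfolding s'_def using meas by auto
    show "integrable lborel w" by fact
    show "AE x in lborel. ((\<lambda>T. s' T x) \<longlongrightarrow> 0) at_top"
    proof (rule AE_I2)
      fix x
      have "((\<lambda>T. s (inverse T) x) \<longlongrightarrow> 0) at_top"
        using lim[of x] unfolding filterlim_at_right_to_top .
      moreover have "\<forall>\<^sub>F T in at_top. s (inverse T) x = s' T x"
        using ev by eventually_elim (simp add: s'_def)
      ultimately show "((\<lambda>T. s' T x) \<longlongrightarrow> 0) at_top"
        using tendsto_cong by fastforce
    qed
    show "\<forall>\<^sub>F T in at_top. AE x in lborel. norm (s' T x) \<le> w x"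
    proof -
      have bnd': "\<And>e x. 0 < e \<Longrightarrow> e \<le> e0 \<Longrightarrow> \<bar>s e x\<bar> \<le> w x" using bnd by simp
      show ?thesis using ev by eventually_elim (auto simp: s'_def intro!: AE_I2 bnd')
    qed
  qed
  then have "((\<lambda>T. integral\<^sup>L lborel (s' T)) \<longlongrightarrow> 0) at_top" by simp
  moreover have "\<forall>\<^sub>F T in at_top. integral\<^sup>L lborel (s' T) = integral\<^sup>L lborel (s (inverse T))"
    using ev by eventually_elim (simp add: s'_def)
  ultimately have "((\<lambda>T. integral\<^sup>L lborel (s (inverse T))) \<longlongrightarrow> 0) at_top"
    using tendsto_cong by fastforce
  then show ?thesis unfolding filterlim_at_right_to_top .
qed

lemma condI_bound:
  fixes D :: "'n::finite \<Rightarrow> (real^'n) set" and g :: "real \<Rightarrow> 'n \<Rightarrow> real^'n \<Rightarrow> real"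
  assumes I: "cond_I D g" and Q: "Q \<in> gens D"
  obtains h where "(\<lambda>t. h t * indicator {0..} t) \<in> borel_measurable lborel"
    "(\<integral>\<^sup>+t. h t * indicator {0..} t \<partial>lborel) < \<infinity>" "\<And>t j. ennreal \<bar>g t j (Q$j)\<bar> \<le> h t"
proof -
  define c where "c = (\<Sum>j\<in>UNIV. norm (Q$j)) + 1"
  have c: "c > 0" unfolding c_def by (simp add: add_nonneg_pos sum_nonneg)
  have nj: "norm (Q$j) \<le> c" for j
  proof -
    have "norm (Q$j) \<le> (\<Sum>j\<in>UNIV. norm (Q$j))" by (rule member_le_sum) auto
    then show ?thesis unfolding c_def by simp
  qed
  define h where "h t = (SUP iq\<in>{(i,q). q \<in> D i \<and> norm q \<le> c}. ennreal \<bar>g t (fst iq) (snd iq)\<bar>)" for t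
  from I c have hp: "(\<lambda>t. h t * indicator {0..} t) \<in> borel_measurable lborel \<and> (\<integral>\<^sup>+t. h t * indicator {0..} t \<partial>lborel) < \<infinity>"
    unfolding cond_I_def h_def Let_def by auto
  have "ennreal \<bar>g t j (Q$j)\<bar> \<le> h t" for t j
    unfolding h_def
    by (rule SUP_upper2[of "(j, Q$j)"]) (use Q nj in \<open>auto simp: gens_def\<close>)
  with hp that show ?thesis by blast
qed

lemma condI_integrable:
  fixes D :: "'n::finite \<Rightarrow> (real^'n) set" and g :: "real \<Rightarrow> 'n \<Rightarrow> real^'n \<Rightarrow> real"
  assumes I: "cond_I D g" and Q: "Q \<in> gens D" and S: "S \<in> sets borel" "S \<subseteq> {0..}"
    and cw: "continuous_on S w" and wb: "\<And>t. t \<in> S \<Longrightarrow> \<bar>w t\<bar> \<le> C" and C: "0 \<le> C"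
    and cg: "continuous_on S (\<lambda>t. g t k (Q$k))"
  shows "set_integrable lborel S (\<lambda>t. w t * g t k (Q$k))"
proof -
  obtain h where hm: "(\<lambda>t. h t * indicator {0..} t) \<in> borel_measurable lborel"
    and hf: "(\<integral>\<^sup>+t. h t * indicator {0..} t \<partial>lborel) < \<infinity>"
    and hb: "\<And>t j. ennreal \<bar>g t j (Q$j)\<bar> \<le> h t"
    using condI_bound[OF I Q] by blast
  show ?thesis unfolding set_integrable_def
  proof (rule integrableI_bounded)
    show "(\<lambda>x. indicat_real S x *\<^sub>R (w x * g x k (Q $ k))) \<in> borel_measurable lborel"
      using borel_measurable_continuous_on_indicator[OF S(1) continuous_on_mult[OF cw cg]] by simp
    have "(\<integral>\<^sup>+x. ennreal (norm (indicat_real S x *\<^sub>R (w x * g x k (Q $ k)))) \<partial>lborel)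
        \<le> (\<integral>\<^sup>+x. ennreal C * (h x * indicator {0..} x) \<partial>lborel)"
    proof (rule nn_integral_mono)
      fix x
      show "ennreal (norm (indicat_real S x *\<^sub>R (w x * g x k (Q $ k)))) \<le> ennreal C * (h x * indicator {0..} x)"
      proof (cases "x \<in> S")
        case True
        then have x0: "x \<in> {0..}" using S(2) by auto
        have "ennreal (norm (indicat_real S x *\<^sub>R (w x * g x k (Q $ k)))) = ennreal (\<bar>w x\<bar> * \<bar>g x k (Q $ k)\<bar>)"
          using True by (simp add: abs_mult)
        also have "\<dots> \<le> ennreal (C * \<bar>g x k (Q $ k)\<bar>)"
          using wb[OF True] by (intro ennreal_leI mult_right_mono) auto
        also have "\<dots> = ennreal C * ennreal \<bar>g x k (Q $ k)\<bar>" using C by (simp add: ennreal_mult)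
        also have "\<dots> \<le> ennreal C * h x" by (intro mult_left_mono hb) auto
        finally show ?thesis using x0 by simp
      qed simp
    qed
    also have "\<dots> = ennreal C * (\<integral>\<^sup>+x. h x * indicator {0..} x \<partial>lborel)"
      using hm by (rule nn_integral_cmult)
    also have "\<dots> < \<infinity>" using hf by (simp add: ennreal_mult_less_top)
    finally show "(\<integral>\<^sup>+x. ennreal (norm (indicat_real S x *\<^sub>R (w x * g x k (Q $ k)))) \<partial>lborel) < \<infinity>" .
  qed
qed



lemma shift_set_integral:
  fixes \<phi> :: "real \<Rightarrow> real"
  assumes int: "set_integrable lborel {e<..} \<phi>"
  shows "set_integrable lborel {0..} (\<lambda>s. \<phi> (s + e))"
    and "(LINT t:{e<..}|lborel. \<phi> t) = (LINT s:{0..}|lborel. \<phi> (s + e))"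
proof -
  define F where "F x = indicator {e<..} x *\<^sub>R \<phi> x" for x
  have iF: "integrable lborel F" using int unfolding F_def set_integrable_def .
  have iF': "integrable lborel (\<lambda>x. F (e + 1 * x))"
    using iF by (subst lborel_integrable_real_affine_iff) auto
  have i0: "integrable lborel (\<lambda>x. indicator {0::real} x * \<phi> e)"
    by (intro integrable_mult_left) (simp add: integrable_indicator_iff)
  have eq: "indicator {0..} x *\<^sub>R \<phi> (x + e) = F (e + 1 * x) + indicator {0::real} x * \<phi> e" for x
    by (cases "x = 0") (auto simp: F_def indicator_def add.commute)
  show "set_integrable lborel {0..} (\<lambda>s. \<phi> (s + e))"
    unfolding set_integrable_def eq using iF' i0 by (rule Bochner_Integration.integrable_add)
  have "(LINT s:{0..}|lborel. \<phi> (s + e)) = integral\<^sup>L lborel (\<lambda>x. F (e + 1 * x)) + integral\<^sup>L lborel (\<lambda>x. indicator {0::real} x * \<phi> e)"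
    unfolding set_lebesgue_integral_def eq using iF' i0 by (rule Bochner_Integration.integral_add)
  also have "integral\<^sup>L lborel (\<lambda>x. indicator {0::real} x * \<phi> e) = 0"
    by simp
  also have "integral\<^sup>L lborel (\<lambda>x. F (e + 1 * x)) = integral\<^sup>L lborel F"
    using lborel_integral_real_affine[of 1 F e] by simp
  finally show "(LINT t:{e<..}|lborel. \<phi> t) = (LINT s:{0..}|lborel. \<phi> (s + e))"
    by (simp add: set_lebesgue_integral_def F_def[abs_def])
qed

definition gQ :: "(real \<Rightarrow> 'n::finite \<Rightarrow> real^'n \<Rightarrow> real) \<Rightarrow> real^'n^'n \<Rightarrow> 'n \<Rightarrow> real \<Rightarrow> real" where
  "gQ g Q i t = (\<Sum>k\<in>UNIV. trans_mat t Q $ i $ k * g t k (Q $ k))"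

definition Hf :: "(real \<Rightarrow> 'n::finite \<Rightarrow> real^'n \<Rightarrow> real) \<Rightarrow> real^'n^'n \<Rightarrow> real \<Rightarrow> 'n \<Rightarrow> real" where
  "Hf g Qs e j = (LINT t:{e<..}|lborel. (\<Sum>k\<in>UNIV. trans_mat (t - e) Qs $ j $ k * g t k (Qs $ k)))"

lemma payoff_gQ: "payoff g Q i = (LINT t:{0..}|lborel. gQ g Q i t)"
  by (simp add: payoff_def gQ_def)

locale mt_setting =
  fixes D :: "'n::finite \<Rightarrow> (real^'n) set" and f ft :: "real \<Rightarrow> 'n \<Rightarrow> real^'n \<Rightarrow> real"
  assumes D_sub: "\<And>i. D i \<subseteq> E_set i"
    and I_f: "cond_I D f"
    and C1: "\<And>i q. q \<in> D i \<Longrightarrow>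
               (\<forall>t\<ge>0. ((\<lambda>s. f s i q) has_real_derivative ft t i q) (at t within {0..}))
               \<and> continuous_on {0..} (\<lambda>t. ft t i q)"
    and I_ft: "cond_I D ft"
    and R: "cond_R D f ft"

context mt_setting
begin

lemma gens_genm: "Q \<in> gens D \<Longrightarrow> genm Q"
  using D_sub by (auto simp: gens_def genm_def)

lemma gens_row: "Q \<in> gens D \<Longrightarrow> Q $ k \<in> D k"
  by (simp add: gens_def)

lemma cont_f: "q \<in> D k \<Longrightarrow> continuous_on {0..} (\<lambda>t. f t k q)"
  by (rule DERIV_continuous_on) (use C1 in auto)

lemma cont_ft: "q \<in> D k \<Longrightarrow> continuous_on {0..} (\<lambda>t. ft t k q)"
  using C1 by auto

lemma w_bound:
  assumes "Q \<in> gens D" "cond_I D g" "S \<in> sets borel" "S \<subseteq> {0..}" "continuous_on S w"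
    "\<And>t. t \<in> S \<Longrightarrow> \<bar>w t\<bar> \<le> 1" "continuous_on {0..} (\<lambda>t. g t k (Q $ k))"
  shows "set_integrable lborel S (\<lambda>t. w t * g t k (Q $ k))"
  by (rule condI_integrable[OF assms(2,1,3,4,5,6)])
     (auto intro: continuous_on_subset[OF assms(7) assms(4)])

lemma int_gQ:
  assumes Q: "Q \<in> gens D" and g: "g = f \<or> g = ft" and S: "S \<in> sets borel" "S \<subseteq> {0..}"
  shows "set_integrable lborel S (gQ g Q i)"
  unfolding gQ_def
proof (rule set_integrable_sum', simp)
  fix k
  have I: "cond_I D g" using g I_f I_ft by auto
  have c: "continuous_on {0..} (\<lambda>t. g t k (Q $ k))"
    using g cont_f[OF gens_row[OF Q]] cont_ft[OF gens_row[OF Q]] by auto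
  show "set_integrable lborel S (\<lambda>t. trans_mat t Q $ i $ k * g t k (Q $ k))"
    by (rule w_bound[OF Q I S continuous_trans_mat _ c])
       (use S trans_mat_abs_le1[OF gens_genm[OF Q]] in auto)
qed

lemma int_H:
  assumes Q: "Q \<in> gens D" and g: "g = f \<or> g = ft" and e_nn: "0 \<le> e"
  shows "set_integrable lborel {e<..} (\<lambda>t. \<Sum>k\<in>UNIV. trans_mat (t - e) Q $ j $ k * g t k (Q $ k))"
proof (rule set_integrable_sum', simp)
  fix k
  have I: "cond_I D g" using g I_f I_ft by auto
  have c: "continuous_on {0..} (\<lambda>t. g t k (Q $ k))"
    using g cont_f[OF gens_row[OF Q]] cont_ft[OF gens_row[OF Q]] by auto
  have cw: "continuous_on {e<..} (\<lambda>t. trans_mat (t - e) Q $ j $ k)"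
    by (rule continuous_on_compose2[OF continuous_trans_mat[where S=UNIV]]) (auto intro: continuous_intros)
  show "set_integrable lborel {e<..} (\<lambda>t. trans_mat (t - e) Q $ j $ k * g t k (Q $ k))"
  proof (rule w_bound[OF Q I _ _ cw _ c])
    show "{e<..} \<subseteq> {0..}" using e_nn by auto
    fix t assume "t \<in> {e<..}"
    then show "\<bar>trans_mat (t - e) Q $ j $ k\<bar> \<le> 1"
      using trans_mat_abs_le1[OF gens_genm[OF Q]] by simp
  qed simp
qed

lemma sw_decomp:
  assumes Q: "Q \<in> gens D" and Qs: "Qs \<in> gens D" and e_nn: "0 \<le> e"
  shows "payoff_sw f e Q Qs i = (LINT t:{0..e}|lborel. gQ f Q i t) + (\<Sum>j\<in>UNIV. trans_mat e Q $ i $ j * Hf f Qs e j)"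
proof -
  have pw: "(\<Sum>k\<in>UNIV. (trans_mat e Q ** trans_mat (t - e) Qs) $ i $ k * f t k (Qs $ k))
      = (\<Sum>j\<in>UNIV. trans_mat e Q $ i $ j * (\<Sum>k\<in>UNIV. trans_mat (t - e) Qs $ j $ k * f t k (Qs $ k)))" for t
    by (simp add: matrix_matrix_mult_def sum_distrib_left sum_distrib_right mult.assoc)
       (rule sum.swap)
  have "(LINT t:{e<..}|lborel. (\<Sum>k\<in>UNIV. (trans_mat e Q ** trans_mat (t - e) Qs) $ i $ k * f t k (Qs $ k)))
      = (LINT t:{e<..}|lborel. (\<Sum>j\<in>UNIV. trans_mat e Q $ i $ j * (\<Sum>k\<in>UNIV. trans_mat (t - e) Qs $ j $ k * f t k (Qs $ k))))"
    by (simp only: pw)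
  also have "\<dots> = (\<Sum>j\<in>UNIV. LINT t:{e<..}|lborel. trans_mat e Q $ i $ j * (\<Sum>k\<in>UNIV. trans_mat (t - e) Qs $ j $ k * f t k (Qs $ k)))"
    by (rule set_integral_sum') (use int_H[OF Qs _ e_nn] in auto)
  also have "\<dots> = (\<Sum>j\<in>UNIV. trans_mat e Q $ i $ j * Hf f Qs e j)"
    by (simp add: Hf_def)
  finally show ?thesis by (simp add: payoff_sw_def gQ_def)
qed

lemma payoff_split:
  assumes Qs: "Qs \<in> gens D" and e_nn: "0 \<le> e"
  shows "payoff f Qs i = payoff_sw f e Qs Qs i"
proof -
  have U: "{0..} = {0..e} \<union> {e<..}" using e_nn by auto
  have "payoff f Qs i = (LINT t:{0..e}|lborel. gQ f Qs i t) + (LINT t:{e<..}|lborel. gQ f Qs i t)"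
    unfolding payoff_gQ U
    by (rule set_integral_Un) (use e_nn in \<open>auto intro!: int_gQ[OF Qs]\<close>)
  also have "(LINT t:{e<..}|lborel. gQ f Qs i t)
      = (LINT t:{e<..}|lborel. (\<Sum>k\<in>UNIV. (trans_mat e Qs ** trans_mat (t - e) Qs) $ i $ k * f t k (Qs $ k)))"
    by (simp add: gQ_def trans_mat_add)
  finally show ?thesis by (simp add: payoff_sw_def gQ_def)
qed

end



context mt_setting
begin

lemma H_expansion:
  assumes Qs: "Qs \<in> gens D"
  shows "((\<lambda>e. (Hf f Qs e j - payoff f Qs j - e * payoff ft Qs j) / e) \<longlongrightarrow> 0) (at_right 0)"
proof -
  obtain r :: "real \<Rightarrow> real \<Rightarrow> 'n \<Rightarrow> real^'n \<Rightarrow> real" where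
    rall: "(\<forall>t\<ge>0. \<forall>i. \<forall>q\<in>D i. continuous_on {0<..} (\<lambda>\<epsilon>. r t \<epsilon> i q))
   \<and> (\<forall>t\<ge>0. \<forall>\<epsilon>>0. \<forall>i. \<forall>q\<in>D i.
        \<bar>f (t + \<epsilon>) i q - f t i q - \<epsilon> * ft t i q\<bar> \<le> r t \<epsilon> i q)
   \<and> (\<forall>i. \<forall>q\<in>D i. \<exists>\<epsilon>0>0. \<forall>\<epsilon>\<in>{0<..\<epsilon>0}.
        set_integrable lborel {0..} (\<lambda>t. r t \<epsilon> i q))
   \<and> (\<forall>t\<ge>0. \<forall>i. \<forall>q\<in>D i. mono_on {0<..} (\<lambda>\<epsilon>. r t \<epsilon> i q / \<epsilon>))"
    using R unfolding cond_R_def by (elim exE) (rule that)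
  have rb: "\<And>t \<epsilon> i q. t \<ge> 0 \<Longrightarrow> \<epsilon> > 0 \<Longrightarrow> q \<in> D i \<Longrightarrow> \<bar>f (t + \<epsilon>) i q - f t i q - \<epsilon> * ft t i q\<bar> \<le> r t \<epsilon> i q"
    using rall by blast
  have ri: "\<And>i q. q \<in> D i \<Longrightarrow> \<exists>\<epsilon>0>0. \<forall>\<epsilon>\<in>{0<..\<epsilon>0}. set_integrable lborel {0..} (\<lambda>t. r t \<epsilon> i q)"
    using rall by blast
  have rm: "\<And>t i q. t \<ge> 0 \<Longrightarrow> q \<in> D i \<Longrightarrow> mono_on {0<..} (\<lambda>\<epsilon>. r t \<epsilon> i q / \<epsilon>)"
    using rall by blast
  have "\<forall>k. \<exists>\<epsilon>0>0. \<forall>\<epsilon>\<in>{0<..\<epsilon>0}. set_integrable lborel {0..} (\<lambda>t. r t \<epsilon> k (Qs $ k))"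
    using ri gens_row[OF Qs] by blast
  from choice[OF this] obtain e0k where e0k_all: "\<forall>k. e0k k > 0 \<and> (\<forall>\<epsilon>\<in>{0<..e0k k}. set_integrable lborel {0..} (\<lambda>t. r t \<epsilon> k (Qs $ k)))"
    by blast
  then have e0k: "\<And>k. e0k k > 0"
    and e0ki: "\<And>k \<epsilon>. \<epsilon> \<in> {0<..e0k k} \<Longrightarrow> set_integrable lborel {0..} (\<lambda>t. r t \<epsilon> k (Qs $ k))"
    by auto
  define e0 where "e0 = Min (range e0k)"
  have e0_pos: "0 < e0" unfolding e0_def using e0k by (subst Min_gr_iff) auto
  have e0_le: "e0 \<le> e0k k" for k unfolding e0_def by (rule Min_le) auto
  have rint: "set_integrable lborel {0..} (\<lambda>t. r t e0 k (Qs $ k))" for k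
    using e0ki[of e0 k] e0_pos e0_le[of k] by auto
  define A1 where "A1 e s = (\<Sum>k\<in>UNIV. trans_mat s Qs $ j $ k * f (s + e) k (Qs $ k))" for e s
  define \<Phi> where "\<Phi> e s = (\<Sum>k\<in>UNIV. trans_mat s Qs $ j $ k *
      ((f (s + e) k (Qs $ k) - f s k (Qs $ k)) / e - ft s k (Qs $ k)))" for e s
  have \<Phi>_eq: "\<Phi> e s = (A1 e s - gQ f Qs j s) / e - gQ ft Qs j s" for e s
  proof -
    have "\<Phi> e s = (\<Sum>k\<in>UNIV. (trans_mat s Qs $ j $ k * f (s + e) k (Qs $ k) - trans_mat s Qs $ j $ k * f s k (Qs $ k)) / e
        - trans_mat s Qs $ j $ k * ft s k (Qs $ k))"
      unfolding \<Phi>_def by (intro sum.cong refl) (simp add: right_diff_distrib)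
    also have "\<dots> = (\<Sum>k\<in>UNIV. (trans_mat s Qs $ j $ k * f (s + e) k (Qs $ k) - trans_mat s Qs $ j $ k * f s k (Qs $ k)) / e)
        - (\<Sum>k\<in>UNIV. trans_mat s Qs $ j $ k * ft s k (Qs $ k))"
      by (rule sum_subtractf)
    also have "(\<Sum>k\<in>UNIV. (trans_mat s Qs $ j $ k * f (s + e) k (Qs $ k) - trans_mat s Qs $ j $ k * f s k (Qs $ k)) / e)
        = (A1 e s - gQ f Qs j s) / e"
      unfolding A1_def gQ_def sum_divide_distrib[symmetric] sum_subtractf ..
    finally show ?thesis by (simp add: gQ_def)
  qed
  have A1_int: "set_integrable lborel {0..} (A1 e)" and A1_H: "Hf f Qs e j = (LINT s:{0..}|lborel. A1 e s)"
    if "0 \<le> e" for e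
  proof -
    have i: "set_integrable lborel {e<..} (\<lambda>t. \<Sum>k\<in>UNIV. trans_mat (t - e) Qs $ j $ k * f t k (Qs $ k))"
      by (rule int_H[OF Qs _ that]) simp
    have eq: "(\<lambda>s. \<Sum>k\<in>UNIV. trans_mat (s + e - e) Qs $ j $ k * f (s + e) k (Qs $ k)) = A1 e"
      by (simp add: A1_def[abs_def])
    show "set_integrable lborel {0..} (A1 e)" using shift_set_integral(1)[OF i] eq by simp
    show "Hf f Qs e j = (LINT s:{0..}|lborel. A1 e s)"
      using shift_set_integral(2)[OF i] eq unfolding Hf_def by simp
  qed
  have iF: "set_integrable lborel {0..} (gQ f Qs j)" by (rule int_gQ[OF Qs]) auto
  have iG: "set_integrable lborel {0..} (gQ ft Qs j)" by (rule int_gQ[OF Qs]) auto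
  have \<Phi>_int: "set_integrable lborel {0..} (\<Phi> e)" and \<Phi>_val: "(LINT s:{0..}|lborel. \<Phi> e s)
      = (Hf f Qs e j - payoff f Qs j - e * payoff ft Qs j) / e" if "0 < e" for e
  proof -
    have i1: "set_integrable lborel {0..} (\<lambda>s. (A1 e s - gQ f Qs j s) / e)"
      using A1_int[of e] iF that by (intro set_integrable_divide set_integral_diff(1)) auto
    show "set_integrable lborel {0..} (\<Phi> e)"
      unfolding \<Phi>_eq[abs_def] using i1 iG by (rule set_integral_diff(1))
    have "(LINT s:{0..}|lborel. \<Phi> e s) = (LINT s:{0..}|lborel. (A1 e s - gQ f Qs j s) / e) - (LINT s:{0..}|lborel. gQ ft Qs j s)"
      unfolding \<Phi>_eq using i1 iG by (rule set_integral_diff(2))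
    also have "(LINT s:{0..}|lborel. (A1 e s - gQ f Qs j s) / e) = ((LINT s:{0..}|lborel. A1 e s) - (LINT s:{0..}|lborel. gQ f Qs j s)) / e"
      using A1_int[of e] iF that by (simp add: set_integral_diff(2))
    finally show "(LINT s:{0..}|lborel. \<Phi> e s) = (Hf f Qs e j - payoff f Qs j - e * payoff ft Qs j) / e"
      using A1_H[of e] that by (simp add: payoff_gQ diff_divide_distrib)
  qed
  define w where "w x = indicator {0..} x * ((\<Sum>k\<in>UNIV. r x e0 k (Qs $ k)) / e0)" for x
  have "((\<lambda>e. integral\<^sup>L lborel (\<lambda>x. indicator {0..} x * \<Phi> e x)) \<longlongrightarrow> 0) (at_right 0)"
  proof (rule DCT_right[OF e0_pos, where w=w])
    fix e :: real assume "0 < e" "e \<le> e0"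
    then show "(\<lambda>x. indicator {0..} x * \<Phi> e x) \<in> borel_measurable lborel"
      using \<Phi>_int[of e] unfolding set_integrable_def by (auto dest: borel_measurable_integrable)
  next
    have "set_integrable lborel {0..} (\<lambda>x. (\<Sum>k\<in>UNIV. r x e0 k (Qs $ k)) / e0)"
      by (intro set_integrable_divide set_integrable_sum') (auto intro: rint)
    then show "integrable lborel w" unfolding w_def set_integrable_def by simp
  next
    fix x :: real
    show "((\<lambda>e. indicator {0..} x * \<Phi> e x) \<longlongrightarrow> 0) (at_right 0)"
    proof (cases "0 \<le> x")
      case False then show ?thesis by simp
    next
      case True
      have "((\<lambda>e. (f (x + e) k (Qs $ k) - f x k (Qs $ k)) / e - ft x k (Qs $ k)) \<longlongrightarrow> 0) (at_right 0)" for k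
      proof -
        have d: "((\<lambda>s. f s k (Qs $ k)) has_real_derivative ft x k (Qs $ k)) (at x within {0..})"
          using C1[OF gens_row[OF Qs]] True by auto
        then have "((\<lambda>y. (f y k (Qs $ k) - f x k (Qs $ k)) / (y - x)) \<longlongrightarrow> ft x k (Qs $ k)) (at x within {0..})"
          by (simp add: has_field_derivative_iff)
        moreover have "filterlim (\<lambda>e. x + e) (at x within {0..}) (at_right 0)"
        proof (subst filterlim_at, rule conjI)
          show "\<forall>\<^sub>F e in at_right 0. x + e \<in> {0..} \<and> x + e \<noteq> x"
            using True by (auto simp: eventually_at_right_field intro: exI[of _ 1])
          have "((\<lambda>e. x + e) \<longlongrightarrow> x + 0) (at_right 0)"
            by (intro tendsto_intros tendsto_ident_at)
          then show "((\<lambda>e. x + e) \<longlongrightarrow> x) (at_right 0)" by simp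
        qed
        ultimately have "((\<lambda>e. (f (x + e) k (Qs $ k) - f x k (Qs $ k)) / (x + e - x)) \<longlongrightarrow> ft x k (Qs $ k)) (at_right 0)"
          by (rule filterlim_compose)
        then have "((\<lambda>e. (f (x + e) k (Qs $ k) - f x k (Qs $ k)) / e) \<longlongrightarrow> ft x k (Qs $ k)) (at_right 0)"
          by simp
        then show ?thesis by (simp add: LIM_zero)
      qed
      then have "((\<lambda>e. \<Phi> e x) \<longlongrightarrow> 0) (at_right 0)"
        unfolding \<Phi>_def by (auto intro!: tendsto_null_sum tendsto_mult_right_zero)
      then show ?thesis using True by simp
    qed
  next
    fix e x :: real assume e: "0 < e" "e \<le> e0"
    show "norm (indicator {0..} x * \<Phi> e x) \<le> w x"
    proof (cases "0 \<le> x")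
      case False then show ?thesis by (simp add: w_def)
    next
      case True
      have "\<bar>\<Phi> e x\<bar> \<le> (\<Sum>k\<in>UNIV. \<bar>trans_mat x Qs $ j $ k * ((f (x + e) k (Qs $ k) - f x k (Qs $ k)) / e - ft x k (Qs $ k))\<bar>)"
        unfolding \<Phi>_def by (rule sum_abs)
      also have "\<dots> \<le> (\<Sum>k\<in>UNIV. r x e0 k (Qs $ k) / e0)"
      proof (rule sum_mono)
        fix k :: 'n
        have q: "Qs $ k \<in> D k" by (rule gens_row[OF Qs])
        have h1: "\<bar>trans_mat x Qs $ j $ k * ((f (x + e) k (Qs $ k) - f x k (Qs $ k)) / e - ft x k (Qs $ k))\<bar>
            \<le> \<bar>(f (x + e) k (Qs $ k) - f x k (Qs $ k)) / e - ft x k (Qs $ k)\<bar>"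
          unfolding abs_mult
          using mult_right_mono[OF trans_mat_abs_le1[OF gens_genm[OF Qs] True, of j k]
              abs_ge_zero[of "(f (x + e) k (Qs $ k) - f x k (Qs $ k)) / e - ft x k (Qs $ k)"]] by simp
        have eq: "(f (x + e) k (Qs $ k) - f x k (Qs $ k)) / e - ft x k (Qs $ k)
            = (f (x + e) k (Qs $ k) - f x k (Qs $ k) - e * ft x k (Qs $ k)) / e"
          using e by (simp add: field_simps)
        have h2: "\<bar>(f (x + e) k (Qs $ k) - f x k (Qs $ k)) / e - ft x k (Qs $ k)\<bar> \<le> r x e k (Qs $ k) / e"
          unfolding eq using rb[OF True e(1) q] e by (simp add: abs_divide divide_right_mono)
        have h3: "r x e k (Qs $ k) / e \<le> r x e0 k (Qs $ k) / e0"
          using mono_onD[OF rm[OF True q], of e e0] e e0_pos by simp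
        show "\<bar>trans_mat x Qs $ j $ k * ((f (x + e) k (Qs $ k) - f x k (Qs $ k)) / e - ft x k (Qs $ k))\<bar>
            \<le> r x e0 k (Qs $ k) / e0" by (rule order_trans[OF h1 order_trans[OF h2 h3]])
      qed
      finally show ?thesis using True by (simp add: w_def sum_divide_distrib)
    qed
  qed
  moreover have "\<forall>\<^sub>F e in at_right 0. integral\<^sup>L lborel (\<lambda>x. indicator {0..} x * \<Phi> e x)
      = (Hf f Qs e j - payoff f Qs j - e * payoff ft Qs j) / e"
    unfolding eventually_at_right_field
    by (intro exI[of _ 1]) (auto simp: \<Phi>_val[symmetric] set_lebesgue_integral_def)
  ultimately show ?thesis using tendsto_cong by fastforce
qed

end



definition o2 :: "(real \<Rightarrow> real) \<Rightarrow> bool" where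
  "o2 \<phi> \<longleftrightarrow> ((\<lambda>e. \<phi> e / e^2) \<longlongrightarrow> 0) (at_right 0)"

lemma o2_add: "o2 \<phi> \<Longrightarrow> o2 \<psi> \<Longrightarrow> o2 (\<lambda>e. \<phi> e + \<psi> e)"
  unfolding o2_def add_divide_distrib by (rule tendsto_add_zero)

lemma o2_diff: "o2 \<phi> \<Longrightarrow> o2 \<psi> \<Longrightarrow> o2 (\<lambda>e. \<phi> e - \<psi> e)"
  unfolding o2_def diff_divide_distrib
proof -
  assume a: "((\<lambda>e. \<phi> e / e\<^sup>2) \<longlongrightarrow> 0) (at_right 0)" and b: "((\<lambda>e. \<psi> e / e\<^sup>2) \<longlongrightarrow> 0) (at_right 0)"
  show "((\<lambda>e. \<phi> e / e\<^sup>2 - \<psi> e / e\<^sup>2) \<longlongrightarrow> 0) (at_right 0)"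
    using tendsto_diff[OF a b] by simp
qed

lemma o2_sum: "finite I \<Longrightarrow> (\<And>j. j \<in> I \<Longrightarrow> o2 (\<phi> j)) \<Longrightarrow> o2 (\<lambda>e. \<Sum>j\<in>I. \<phi> j e)"
  unfolding o2_def sum_divide_distrib by (rule tendsto_null_sum)

lemma o2_cong: "o2 \<phi> \<Longrightarrow> (\<And>e. 0 < e \<Longrightarrow> \<phi> e = \<psi> e) \<Longrightarrow> o2 \<psi>"
  unfolding o2_def
proof -
  assume t: "((\<lambda>e. \<phi> e / e^2) \<longlongrightarrow> 0) (at_right 0)" and eq: "\<And>e. 0 < e \<Longrightarrow> \<phi> e = \<psi> e"
  have "\<forall>\<^sub>F e in at_right 0. \<phi> e / e^2 = \<psi> e / e^2"
    by (rule eventually_at_rightI[of 0 1]) (simp_all add: eq)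
  then show "((\<lambda>e. \<psi> e / e^2) \<longlongrightarrow> 0) (at_right 0)" by (rule Lim_transform_eventually[OF t])
qed

lemma prod_expansion:
  assumes p: "o2 (\<lambda>e. p e - e * a - e^2/2 * b)"
    and h: "((\<lambda>e. (h e - F - e * G) / e) \<longlongrightarrow> 0) (at_right 0)"
  shows "o2 (\<lambda>e. p e * h e - e * a * F - e^2 * (a * G + b * F / 2))"
proof -
  define X where "X e = (p e - e * a - e^2/2 * b) / e^2" for e
  define Y where "Y e = (h e - F - e * G) / e" for e
  have X: "(X \<longlongrightarrow> 0) (at_right 0)" using p unfolding o2_def X_def .
  have Y: "(Y \<longlongrightarrow> 0) (at_right 0)" using h unfolding Y_def .
  have e0: "((\<lambda>e::real. e) \<longlongrightarrow> 0) (at_right 0)" by (rule tendsto_ident_at)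
  have lim: "((\<lambda>e. e * b * G / 2 + X e * (F + e * G) + (e * X e + a + e * b / 2) * Y e) \<longlongrightarrow>
      0 * b * G / 2 + 0 * (F + 0 * G) + (0 * 0 + a + 0 * b / 2) * 0) (at_right 0)"
    by (intro tendsto_intros e0 X Y) simp_all
  show ?thesis unfolding o2_def
  proof (rule Lim_transform_eventually)
    show "((\<lambda>e. e * b * G / 2 + X e * (F + e * G) + (e * X e + a + e * b / 2) * Y e) \<longlongrightarrow> 0) (at_right 0)"
      using lim by simp
    show "\<forall>\<^sub>F e in at_right 0. e * b * G / 2 + X e * (F + e * G) + (e * X e + a + e * b / 2) * Y e
        = (p e * h e - e * a * F - e^2 * (a * G + b * F / 2)) / e^2"
    proof (rule eventually_at_rightI[of 0 1])
      fix e :: real assume "e \<in> {0<..<1}"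
      then have e: "e \<noteq> 0" by simp
      show "e * b * G / 2 + X e * (F + e * G) + (e * X e + a + e * b / 2) * Y e
        = (p e * h e - e * a * F - e^2 * (a * G + b * F / 2)) / e^2"
        unfolding X_def Y_def using e by (simp add: field_simps power2_eq_square)
    qed simp
  qed
qed

context mt_setting
begin

lemma tP:
  "o2 (\<lambda>e. trans_mat e Q $ i $ j - mat 1 $ i $ j - e * Q $ i $ j - e^2/2 * (Q ** Q) $ i $ j)"
  unfolding o2_def
proof (rule Lim_null_comparison)
  define c where "c = norm (Abs_mx Q)"
  show "\<forall>\<^sub>F e in at_right 0. norm ((trans_mat e Q $ i $ j - mat 1 $ i $ j - e * Q $ i $ j - e^2/2 * (Q ** Q) $ i $ j) / e^2)
      \<le> e * c^3 * exp (e * c)"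
  proof (rule eventually_at_rightI[of 0 1])
    fix e :: real assume "e \<in> {0<..<1}"
    then have e: "0 < e" by simp
    have "\<bar>trans_mat e Q $ i $ j - mat 1 $ i $ j - e * Q $ i $ j - e^2/2 * (Q ** Q) $ i $ j\<bar>
        \<le> (e * c) ^ 3 * exp (e * c)"
      using trans_mat_taylor2[of e Q i j] e by (simp add: c_def)
    then show "norm ((trans_mat e Q $ i $ j - mat 1 $ i $ j - e * Q $ i $ j - e^2/2 * (Q ** Q) $ i $ j) / e^2)
      \<le> e * c^3 * exp (e * c)"
      using e by (simp add: abs_divide divide_le_eq power2_eq_square power3_eq_cube mult_ac)
  qed simp
  have "((\<lambda>e. e * c^3 * exp (e * c)) \<longlongrightarrow> 0 * c^3 * exp (0 * c)) (at_right 0)"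
    by (intro tendsto_intros tendsto_ident_at)
  then show "((\<lambda>e. e * c^3 * exp (e * c)) \<longlongrightarrow> 0) (at_right 0)" by simp
qed

definition gd :: "real^'n^'n \<Rightarrow> 'n \<Rightarrow> real" where
  "gd Q i = (\<Sum>k\<in>UNIV. Q $ i $ k * f 0 k (Q $ k)) + ft 0 i (Q $ i)"

lemma gQ_0: "gQ f Q i 0 = f 0 i (Q $ i)"
proof -
  have "trans_mat 0 Q $ i $ k * f 0 k (Q $ k) = (if k = i then f 0 i (Q $ i) else 0)" for k
    by (auto simp: trans_mat_0 mat_def)
  then show ?thesis by (simp add: gQ_def)
qed

lemma gQ_deriv0:
  assumes Q: "Q \<in> gens D"
  shows "(gQ f Q i has_real_derivative gd Q i) (at 0 within {0..})"
proof -
  have d: "((\<lambda>t. trans_mat t Q $ i $ k * f t k (Q $ k)) has_real_derivative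
      Q $ i $ k * f 0 k (Q $ k) + ft 0 k (Q $ k) * trans_mat 0 Q $ i $ k) (at 0 within {0..})" for k
    by (rule DERIV_mult[OF trans_mat_deriv0]) (use C1[OF gens_row[OF Q]] in auto)
  have "(gQ f Q i has_real_derivative (\<Sum>k\<in>UNIV. Q $ i $ k * f 0 k (Q $ k) + ft 0 k (Q $ k) * trans_mat 0 Q $ i $ k))
      (at 0 within {0..})"
    unfolding gQ_def[abs_def] by (rule DERIV_sum) (rule d)
  moreover have "(\<Sum>k\<in>UNIV. Q $ i $ k * f 0 k (Q $ k) + ft 0 k (Q $ k) * trans_mat 0 Q $ i $ k) = gd Q i"
  proof -
    have "ft 0 k (Q $ k) * trans_mat 0 Q $ i $ k = (if k = i then ft 0 i (Q $ i) else 0)" for k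
      by (auto simp: trans_mat_0 mat_def)
    then show ?thesis by (simp add: gd_def sum.distrib)
  qed
  ultimately show ?thesis by simp
qed

lemma tI:
  assumes Q: "Q \<in> gens D"
  shows "o2 (\<lambda>e. (LINT t:{0..e}|lborel. gQ f Q i t) - e * f 0 i (Q $ i) - e^2/2 * gd Q i)"
  unfolding o2_def
  using int_taylor0[OF gQ_deriv0[OF Q], of i] int_gQ[OF Q] by (simp add: gQ_0)

end



context mt_setting
begin

lemma Lambda_eq:
  "Lambda f ft Qs i Q = gd Q i + (\<Sum>j\<in>UNIV. 2 * Q $ i $ j * payoff ft Qs j + (Q ** Q) $ i $ j * payoff f Qs j)"
proof -
  have dbl: "(\<Sum>j\<in>UNIV. Q $ i $ j * (\<Sum>k\<in>UNIV. Q $ j $ k * payoff f Qs k))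
      = (\<Sum>j\<in>UNIV. (Q ** Q) $ i $ j * payoff f Qs j)"
  proof -
    have "(\<Sum>j\<in>UNIV. Q $ i $ j * (\<Sum>k\<in>UNIV. Q $ j $ k * payoff f Qs k))
        = (\<Sum>j\<in>UNIV. \<Sum>k\<in>UNIV. Q $ i $ j * Q $ j $ k * payoff f Qs k)"
      by (simp add: sum_distrib_left mult.assoc)
    also have "\<dots> = (\<Sum>k\<in>UNIV. \<Sum>j\<in>UNIV. Q $ i $ j * Q $ j $ k * payoff f Qs k)"
      by (rule sum.swap)
    also have "\<dots> = (\<Sum>k\<in>UNIV. (Q ** Q) $ i $ k * payoff f Qs k)"
      by (simp add: matrix_matrix_mult_def sum_distrib_right)
    finally show ?thesis .
  qed
  have "Lambda f ft Qs i Q = ft 0 i (Q $ i) + (\<Sum>j\<in>UNIV. Q $ i $ j * (2 * payoff ft Qs j + (f 0 j (Q $ j)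
      + (\<Sum>k\<in>UNIV. Q $ j $ k * payoff f Qs k))))"
    by (simp add: Lambda_def Gamma_vec_def Gamma_def payoff_vec_def inner_vec_def)
  also have "\<dots> = ft 0 i (Q $ i) + (\<Sum>j\<in>UNIV. Q $ i $ j * f 0 j (Q $ j))
      + (\<Sum>j\<in>UNIV. 2 * Q $ i $ j * payoff ft Qs j)
      + (\<Sum>j\<in>UNIV. Q $ i $ j * (\<Sum>k\<in>UNIV. Q $ j $ k * payoff f Qs k))"
    by (simp add: distrib_left sum.distrib mult.assoc mult.left_commute)
  also have "\<dots> = gd Q i + (\<Sum>j\<in>UNIV. 2 * Q $ i $ j * payoff ft Qs j + (Q ** Q) $ i $ j * payoff f Qs j)"
    unfolding dbl gd_def by (simp add: sum.distrib)
  finally show ?thesis .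
qed

lemma Gamma_diff:
  "Gamma f Qs i (Qs $ i) - Gamma f Qs i (Q $ i)
    = f 0 i (Qs $ i) - f 0 i (Q $ i) + (\<Sum>j\<in>UNIV. (Qs $ i $ j - Q $ i $ j) * payoff f Qs j)"
  by (simp add: Gamma_def payoff_vec_def inner_vec_def sum_subtractf left_diff_distrib)

lemma main_expansion:
  assumes Q: "Q \<in> gens D" and Qs: "Qs \<in> gens D"
  shows "o2 (\<lambda>e. (payoff f Qs i - payoff_sw f e Q Qs i)
      - e * (Gamma f Qs i (Qs $ i) - Gamma f Qs i (Q $ i))
      - e^2/2 * (Lambda f ft Qs i Qs - Lambda f ft Qs i Q))"
proof -
  define F where "F j = payoff f Qs j" for j
  define G where "G j = payoff ft Qs j" for j
  define a where "a j = Qs $ i $ j - Q $ i $ j" for j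
  define b where "b j = (Qs ** Qs) $ i $ j - (Q ** Q) $ i $ j" for j
  define H where "H e j = Hf f Qs e j" for e j
  have Y: "o2 (\<lambda>e. (trans_mat e Qs $ i $ j - trans_mat e Q $ i $ j) * H e j - e * a j * F j
      - e^2 * (a j * G j + b j * F j / 2))" for j
  proof (rule prod_expansion)
    show "o2 (\<lambda>e. trans_mat e Qs $ i $ j - trans_mat e Q $ i $ j - e * a j - e^2/2 * b j)"
      by (rule o2_cong[OF o2_diff[OF tP[of Qs i j] tP[of Q i j]]]) (simp add: a_def b_def algebra_simps)
    show "((\<lambda>e. (H e j - F j - e * G j) / e) \<longlongrightarrow> 0) (at_right 0)"
      unfolding H_def F_def G_def by (rule H_expansion[OF Qs])
  qed
  have all: "o2 (\<lambda>e. ((LINT t:{0..e}|lborel. gQ f Qs i t) - e * f 0 i (Qs $ i) - e^2/2 * gd Qs i)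
      - ((LINT t:{0..e}|lborel. gQ f Q i t) - e * f 0 i (Q $ i) - e^2/2 * gd Q i)
      + (\<Sum>j\<in>UNIV. (trans_mat e Qs $ i $ j - trans_mat e Q $ i $ j) * H e j - e * a j * F j
      - e^2 * (a j * G j + b j * F j / 2)))"
    by (intro o2_add o2_diff tI Q Qs o2_sum Y) simp
  show ?thesis
  proof (rule o2_cong[OF all])
    fix e :: real assume e: "0 < e"
    define IQs where "IQs = (LINT t:{0..e}|lborel. gQ f Qs i t)"
    define IQ where "IQ = (LINT t:{0..e}|lborel. gQ f Q i t)"
    define SP where "SP = (\<Sum>j\<in>UNIV. trans_mat e Qs $ i $ j * H e j)"
    define SQ where "SQ = (\<Sum>j\<in>UNIV. trans_mat e Q $ i $ j * H e j)"
    define AF where "AF = (\<Sum>j\<in>UNIV. a j * F j)"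
    define SG where "SG = (\<Sum>j\<in>UNIV. a j * G j)"
    define SB where "SB = (\<Sum>j\<in>UNIV. b j * F j)"
    have D1: "payoff f Qs i = IQs + SP"
      using payoff_split[OF Qs, of e i] sw_decomp[OF Qs Qs, of e i] e
      by (simp add: IQs_def SP_def H_def)
    have D2: "payoff_sw f e Q Qs i = IQ + SQ"
      using sw_decomp[OF Q Qs, of e i] e by (simp add: IQ_def SQ_def H_def)
    have A: "Gamma f Qs i (Qs $ i) - Gamma f Qs i (Q $ i) = f 0 i (Qs $ i) - f 0 i (Q $ i) + AF"
      by (simp add: Gamma_diff AF_def a_def F_def)
    have B: "Lambda f ft Qs i Qs - Lambda f ft Qs i Q = gd Qs i - gd Q i + 2 * SG + SB"
    proof -
      have "(\<Sum>j\<in>UNIV. 2 * Qs $ i $ j * G j + (Qs ** Qs) $ i $ j * F j)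
          - (\<Sum>j\<in>UNIV. 2 * Q $ i $ j * G j + (Q ** Q) $ i $ j * F j)
          = (\<Sum>j\<in>UNIV. 2 * (a j * G j) + b j * F j)"
        unfolding sum_subtractf[symmetric] by (intro sum.cong refl) (simp add: a_def b_def algebra_simps)
      also have "\<dots> = 2 * SG + SB" by (simp add: SG_def SB_def sum.distrib sum_distrib_left)
      finally show ?thesis by (simp add: Lambda_eq F_def G_def)
    qed
    have SY: "(\<Sum>j\<in>UNIV. (trans_mat e Qs $ i $ j - trans_mat e Q $ i $ j) * H e j - e * a j * F j
        - e^2 * (a j * G j + b j * F j / 2)) = SP - SQ - e * AF - e^2 * (SG + SB / 2)"
    proof -
      have s1: "(\<Sum>j\<in>UNIV. (trans_mat e Qs $ i $ j - trans_mat e Q $ i $ j) * H e j) = SP - SQ"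
        by (simp add: SP_def SQ_def left_diff_distrib sum_subtractf)
      have s2: "(\<Sum>j\<in>UNIV. e * a j * F j) = e * AF"
        by (simp add: AF_def sum_distrib_left mult.assoc)
      have s3: "(\<Sum>j\<in>UNIV. e^2 * (a j * G j + b j * F j / 2)) = e^2 * (SG + SB / 2)"
        by (simp add: SG_def SB_def distrib_left sum.distrib sum_distrib_left sum_divide_distrib)
      show ?thesis by (simp add: sum_subtractf s1 s2 s3)
    qed
    show "((LINT t:{0..e}|lborel. gQ f Qs i t) - e * f 0 i (Qs $ i) - e^2/2 * gd Qs i)
      - ((LINT t:{0..e}|lborel. gQ f Q i t) - e * f 0 i (Q $ i) - e^2/2 * gd Q i)
      + (\<Sum>j\<in>UNIV. (trans_mat e Qs $ i $ j - trans_mat e Q $ i $ j) * H e j - e * a j * F j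
      - e^2 * (a j * G j + b j * F j / 2))
      = (payoff f Qs i - payoff_sw f e Q Qs i)
      - e * (Gamma f Qs i (Qs $ i) - Gamma f Qs i (Q $ i))
      - e^2/2 * (Lambda f ft Qs i Qs - Lambda f ft Qs i Q)"
      unfolding SY D1 D2 A B IQs_def[symmetric] IQ_def[symmetric]
      by (simp add: algebra_simps)
  qed
qed

end



lemma ratio_lim:
  assumes "o2 (\<lambda>e. d e - e * A - e^2/2 * B)"
  shows "((\<lambda>e. d e / e) \<longlongrightarrow> A) (at_right 0)"
proof -
  define X where "X e = (d e - e * A - e^2/2 * B) / e^2" for e
  have X: "(X \<longlongrightarrow> 0) (at_right 0)" using assms unfolding o2_def X_def .
  have "((\<lambda>e. e * X e + A + e * B / 2) \<longlongrightarrow> 0 * 0 + A + 0 * B / 2) (at_right 0)"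
    by (intro tendsto_intros X tendsto_ident_at) simp_all
  then have l: "((\<lambda>e. e * X e + A + e * B / 2) \<longlongrightarrow> A) (at_right 0)" by simp
  have "\<forall>\<^sub>F e in at_right 0. e * X e + A + e * B / 2 = d e / e"
  proof (rule eventually_at_rightI[of 0 1])
    fix e :: real assume "e \<in> {0<..<1}"
    then have e: "e \<noteq> 0" by simp
    then show "e * X e + A + e * B / 2 = d e / e"
      unfolding X_def by (simp add: field_simps power2_eq_square)
  qed simp
  then show ?thesis by (rule Lim_transform_eventually[OF l])
qed

lemma ratio2_lim:
  assumes "o2 (\<lambda>e. d e - e * 0 - e^2/2 * B)"
  shows "((\<lambda>e. d e / e^2) \<longlongrightarrow> B / 2) (at_right 0)"
proof -
  define X where "X e = (d e - e * 0 - e^2/2 * B) / e^2" for e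
  have X: "(X \<longlongrightarrow> 0) (at_right 0)" using assms unfolding o2_def X_def .
  have "((\<lambda>e. X e + B / 2) \<longlongrightarrow> 0 + B / 2) (at_right 0)"
    by (intro tendsto_intros X)
  then have l: "((\<lambda>e. X e + B / 2) \<longlongrightarrow> B / 2) (at_right 0)" by simp
  have "\<forall>\<^sub>F e in at_right 0. X e + B / 2 = d e / e^2"
  proof (rule eventually_at_rightI[of 0 1])
    fix e :: real assume "e \<in> {0<..<1}"
    then have e: "e \<noteq> 0" by simp
    then show "X e + B / 2 = d e / e^2"
      unfolding X_def by (simp add: field_simps power2_eq_square)
  qed simp
  then show ?thesis by (rule Lim_transform_eventually[OF l])
qed

lemma ev_pos1:
  fixes d :: "real \<Rightarrow> real"
  assumes "((\<lambda>e. d e / e) \<longlongrightarrow> A) (at_right 0)" "0 < A"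
  shows "\<forall>\<^sub>F e in at_right 0. 0 < d e"
proof -
  have a: "\<forall>\<^sub>F e in at_right 0. 0 < d e / e" using order_tendstoD(1)[OF assms] .
  have b: "\<forall>\<^sub>F e in at_right (0::real). 0 < e" by (rule eventually_at_rightI[of 0 1]) auto
  have "\<forall>\<^sub>F e in at_right 0. 0 < d e / e \<and> 0 < e" using eventually_conj[OF a b] by simp
  then show ?thesis by (rule eventually_mono) (auto simp: zero_less_divide_iff)
qed

lemma ev_pos2:
  fixes d :: "real \<Rightarrow> real"
  assumes "((\<lambda>e. d e / e^2) \<longlongrightarrow> A) (at_right 0)" "0 < A"
  shows "\<forall>\<^sub>F e in at_right 0. 0 < d e"
proof -
  have a: "\<forall>\<^sub>F e in at_right 0. 0 < d e / e^2" using order_tendstoD(1)[OF assms] .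
  have b: "\<forall>\<^sub>F e in at_right (0::real). 0 < e" by (rule eventually_at_rightI[of 0 1]) auto
  have "\<forall>\<^sub>F e in at_right 0. 0 < d e / e^2 \<and> 0 < e" using eventually_conj[OF a b] by simp
  then show ?thesis by (rule eventually_mono) (auto simp: zero_less_divide_iff)
qed

lemma ev_neg2:
  fixes d :: "real \<Rightarrow> real"
  assumes "((\<lambda>e. d e / e^2) \<longlongrightarrow> A) (at_right 0)" "A < 0"
  shows "\<forall>\<^sub>F e in at_right 0. d e < 0"
proof -
  have a: "\<forall>\<^sub>F e in at_right 0. d e / e^2 < 0" using order_tendstoD(2)[OF assms] .
  have b: "\<forall>\<^sub>F e in at_right (0::real). 0 < e" by (rule eventually_at_rightI[of 0 1]) auto
  have "\<forall>\<^sub>F e in at_right 0. d e / e^2 < 0 \<and> 0 < e" using eventually_conj[OF a b] by simp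
  then show ?thesis by (rule eventually_mono) (auto simp: divide_less_0_iff)
qed

lemma ev_to_interval:
  assumes "\<forall>\<^sub>F e in at_right (0::real). P e"
  shows "\<exists>\<epsilon>>0. \<forall>\<epsilon>'. 0 < \<epsilon>' \<and> \<epsilon>' \<le> \<epsilon> \<longrightarrow> P \<epsilon>'"
proof -
  from assms obtain b where b: "b > 0" "\<And>y. y > 0 \<Longrightarrow> y < b \<Longrightarrow> P y"
    unfolding eventually_at_right_field by auto
  show ?thesis
    by (rule exI[of _ "b/2"]) (use b in auto)
qed

theorem mainTheorem5:
  fixes D :: "'n::finite \<Rightarrow> (real^'n) set"
    and f ft :: "real \<Rightarrow> 'n \<Rightarrow> real^'n \<Rightarrow> real"
    and Qs :: "real^'n^'n"
  assumes D_sub: "\<And>i. D i \<subseteq> E_set i"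
    and I_f: "cond_I D f"
    and C1: "\<And>i q. q \<in> D i \<Longrightarrow>
               (\<forall>t\<ge>0. ((\<lambda>s. f s i q) has_real_derivative ft t i q) (at t within {0..}))
               \<and> continuous_on {0..} (\<lambda>t. ft t i q)"
    and I_ft: "cond_I D ft"
    and R: "cond_R D f ft"
    and Qs_in: "Qs \<in> gens D"
    and weak: "weak_eq D f Qs"
  defines "RR \<equiv> {(i, Q). Q \<in> gens D - {Qs} \<and> Gamma f Qs i (Qs $ i) = Gamma f Qs i (Q $ i)}"
  shows "((\<forall>(i, Q)\<in>RR. Lambda f ft Qs i Qs > Lambda f ft Qs i Q) \<longrightarrow> strong_eq D f Qs)
       \<and> ((\<exists>(i, Q)\<in>RR. Lambda f ft Qs i Qs < Lambda f ft Qs i Q) \<longrightarrow> \<not> strong_eq D f Qs)"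
proof -
  interpret M: mt_setting D f ft
    using D_sub I_f C1 I_ft R by (rule mt_setting.intro)
  define A where "A Q i = Gamma f Qs i (Qs $ i) - Gamma f Qs i (Q $ i)" for Q i
  define B where "B Q i = Lambda f ft Qs i Qs - Lambda f ft Qs i Q" for Q i
  define d where "d Q i e = payoff f Qs i - payoff_sw f e Q Qs i" for Q i e
  have ex: "o2 (\<lambda>e. d Q i e - e * A Q i - e^2/2 * B Q i)" if "Q \<in> gens D" for Q i
    unfolding d_def A_def B_def by (rule M.main_expansion[OF that Qs_in])
  have r1: "((\<lambda>e. d Q i e / e) \<longlongrightarrow> A Q i) (at_right 0)" if "Q \<in> gens D" for Q i
    by (rule ratio_lim[OF ex[OF that]])
  have Age: "0 \<le> A Q i" if Q: "Q \<in> gens D" for Q i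
  proof -
    have "((\<lambda>e. ereal (d Q i e / e)) \<longlongrightarrow> ereal (A Q i)) (at_right 0)"
      using r1[OF Q] by (rule tendsto_ereal)
    then have "Liminf (at_right 0) (\<lambda>e. ereal (d Q i e / e)) = ereal (A Q i)"
      by (intro lim_imp_Liminf) simp_all
    moreover have "Liminf (at_right 0) (\<lambda>e. ereal (d Q i e / e)) \<ge> 0"
      using weak Q unfolding weak_eq_def d_def by blast
    ultimately show ?thesis by simp
  qed
  have r2: "((\<lambda>e. d Q i e / e^2) \<longlongrightarrow> B Q i / 2) (at_right 0)" if "Q \<in> gens D" "A Q i = 0" for Q i
    using ex[OF that(1), of i] that(2) by (intro ratio2_lim) simp
  have dQs: "d Qs i e = 0" if "0 \<le> e" for i e
    unfolding d_def using M.payoff_split[OF Qs_in that, of i] by simp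
  have inRR: "(i, Q) \<in> RR" if "Q \<in> gens D" "Q \<noteq> Qs" "A Q i = 0" for Q i
    using that unfolding RR_def A_def by simp
  show ?thesis
  proof (intro conjI impI)
    assume H1: "\<forall>(i, Q)\<in>RR. Lambda f ft Qs i Qs > Lambda f ft Qs i Q"
    show "strong_eq D f Qs" unfolding strong_eq_def
    proof (intro ballI allI)
      fix Q i assume Q: "Q \<in> gens D"
      have ev: "\<forall>\<^sub>F e in at_right 0. 0 \<le> d Q i e"
      proof (cases "Q = Qs")
        case True
        have "\<forall>\<^sub>F e in at_right (0::real). 0 < e" by (rule eventually_at_rightI[of 0 1]) auto
        then show ?thesis by (rule eventually_mono) (simp add: True dQs)
      next
        case False
        show ?thesis
        proof (cases "A Q i = 0")
          case True
          then have "(i, Q) \<in> RR" using inRR Q False by blast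
          then have "0 < B Q i" using H1 unfolding B_def by auto
          then have "0 < B Q i / 2" by simp
          then have "\<forall>\<^sub>F e in at_right 0. 0 < d Q i e"
            by (rule ev_pos2[OF r2[OF Q True]])
          then show ?thesis by (rule eventually_mono) simp
        next
          case False
          then have "0 < A Q i" using Age[OF Q, of i] by simp
          then have "\<forall>\<^sub>F e in at_right 0. 0 < d Q i e" by (rule ev_pos1[OF r1[OF Q]])
          then show ?thesis by (rule eventually_mono) simp
        qed
      qed
      show "\<exists>\<epsilon>>0. \<forall>\<epsilon>'. 0 < \<epsilon>' \<and> \<epsilon>' \<le> \<epsilon> \<longrightarrow> payoff_sw f \<epsilon>' Q Qs i \<le> payoff f Qs i"
        using ev_to_interval[OF ev] unfolding d_def by simp
    qed
  next
    assume "\<exists>(i, Q)\<in>RR. Lambda f ft Qs i Qs < Lambda f ft Qs i Q"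
    then obtain i Q where iQ: "(i, Q) \<in> RR" and lt: "Lambda f ft Qs i Qs < Lambda f ft Qs i Q" by blast
    have Q: "Q \<in> gens D" and A0: "A Q i = 0" using iQ unfolding RR_def A_def by auto
    have "B Q i / 2 < 0" using lt unfolding B_def by simp
    then have "\<forall>\<^sub>F e in at_right 0. d Q i e < 0" by (rule ev_neg2[OF r2[OF Q A0]])
    from ev_to_interval[OF this] obtain b where b: "b > 0" "\<And>e. 0 < e \<Longrightarrow> e \<le> b \<Longrightarrow> d Q i e < 0"
      by auto
    show "\<not> strong_eq D f Qs"
    proof
      assume "strong_eq D f Qs"
      then obtain \<epsilon> where \<epsilon>: "\<epsilon> > 0" "\<And>\<epsilon>'. 0 < \<epsilon>' \<Longrightarrow> \<epsilon>' \<le> \<epsilon> \<Longrightarrow> payoff f Qs i \<ge> payoff_sw f \<epsilon>' Q Qs i"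
        using Q unfolding strong_eq_def by blast
      define e where "e = min \<epsilon> b"
      have "0 < e" "e \<le> \<epsilon>" "e \<le> b" using \<epsilon>(1) b(1) by (auto simp: e_def)
      then have "d Q i e < 0" "payoff f Qs i \<ge> payoff_sw f e Q Qs i" using b(2) \<epsilon>(2) by auto
      then show False unfolding d_def by simp
    qed
  qed
qed


end
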